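(* Let $Q$ be a $d$-dimensional prismatoid with parallel bases $Q^+$ and $Q^-$, and let $G^+$ and $G^-$ be the geodesic maps on the sphere $S^{d-2}$ obtained by intersecting with $S^{d-2}$ the normal fans of $Q^+$ and $Q^-$ respectively. Then the following are equivalent: (1) One can go from the facet $Q^+$ to the facet $Q^-$ of $Q$ in at most $d$ steps. (2) In the common refinement of $G^+$ and $G^-$ (obtained by superimposing them), one can go from a vertex of $G^+$ to a vertex of $G^-$ traversing at most $d-2$ edges of the common refinement.
   Context: A polytope is a bounded convex polyhedron; facets are faces of codimension one and ridges are faces of codimension two. A step from one facet of $Q$ to another consists of moving between two facets sharing a ridge; "going from $Q^+$ to $Q^-$ in at most $d$ steps" means there is a sequence of at most $d$ such steps starting at $Q^+$ and ending at $Q^-$. A prismatoid is a polytope $Q$ all of whose vertices lie in the union of two facets $Q^+,Q^-$, called its bases; here the bases are assumed to lie in parallel hyperplanes, both identified with $\mathbb{R}^{d-1}$. The normal fan of a $(d-1)$-polytope $P\subset\mathbb{R}^{d-1}$ is the complex of polyhedral cones in $(\mathbb{R}^{d-1})^*$ formed by the outer normal cones of the faces of $P$ (the normal cone at a point $x$ of $P$ is the set of linear functionals whose maximum on $P$ is attained at $x$). Intersecting it with the unit sphere $S^{d-2}$ yields a geodesic map, i.e. a cell decomposition of $S^{d-2}$ in which every cell is an intersection of hemispheres. The common refinement of two such maps is the cell decomposition whose cells are the nonempty intersections of a cell of $G^+$ with a cell of $G^-$. *)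

theory Defs
  imports "HOL-Analysis.Analysis"
begin

definition ridge_of :: "'a::euclidean_space set \<Rightarrow> 'a set \<Rightarrow> bool" where
  "ridge_of R Q \<longleftrightarrow> R face_of Q \<and> R \<noteq> {} \<and> aff_dim R = aff_dim Q - 2"

definition prismatoid ::
  "'a::euclidean_space set \<Rightarrow> 'a set \<Rightarrow> 'a set \<Rightarrow> 'a \<Rightarrow> real \<Rightarrow> real \<Rightarrow> bool" where
  "prismatoid Q Qp Qm u a b \<longleftrightarrow>
     polytope Q \<and> Qp facet_of Q \<and> Qm facet_of Q \<and> Qp \<noteq> Qm \<and>
     {x. x extreme_point_of Q} \<subseteq> Qp \<union> Qm \<and>
     u \<noteq> 0 \<and> (\<forall>x\<in>Qp. u \<bullet> x = a) \<and> (\<forall>x\<in>Qm. u \<bullet> x = b)"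

definition facet_reach :: "'a::euclidean_space set \<Rightarrow> 'a set \<Rightarrow> 'a set \<Rightarrow> nat \<Rightarrow> bool" where
  "facet_reach Q F G n \<longleftrightarrow>
     (\<exists>k\<le>n. \<exists>Fs :: nat \<Rightarrow> 'a set. Fs 0 = F \<and> Fs k = G \<and>
        (\<forall>i\<le>k. Fs i facet_of Q) \<and>
        (\<forall>i<k. \<exists>R. ridge_of R Q \<and> R \<subseteq> Fs i \<and> R \<subseteq> Fs (Suc i)))"

text \<open>Normal cone (inside the linear subspace L, identified with the dual of the
  direction space of the hyperplane containing P) of the face F of P: the functionals
  whose maximum on P is attained at (every point of) F.\<close>
definition normal_cone :: "'a::euclidean_space set \<Rightarrow> 'a set \<Rightarrow> 'a set \<Rightarrow> 'a set" where
  "normal_cone L P F = {c \<in> L. \<forall>x\<in>F. \<forall>y\<in>P. c \<bullet> y \<le> c \<bullet> x}"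

definition unit_sphere_in :: "'a::euclidean_space set \<Rightarrow> 'a set" where
  "unit_sphere_in L = {c \<in> L. norm c = 1}"

definition geodesic_map :: "'a::euclidean_space set \<Rightarrow> 'a set \<Rightarrow> 'a set set" where
  "geodesic_map L P =
     {C. C \<noteq> {} \<and> (\<exists>F. F face_of P \<and> F \<noteq> {} \<and> C = normal_cone L P F \<inter> unit_sphere_in L)}"

definition common_refinement :: "'a set set \<Rightarrow> 'a set set \<Rightarrow> 'a set set" where
  "common_refinement M N = {C \<inter> D | C D. C \<in> M \<and> D \<in> N \<and> C \<inter> D \<noteq> {}}"

text \<open>Vertices (0-cells) and edges (1-cells) of a spherical cell decomposition.
  A spherical cell has dimension dim(span) - 1.\<close>
definition map_vertices :: "'a::euclidean_space set set \<Rightarrow> 'a set" where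
  "map_vertices M = {v. {v} \<in> M}"

definition map_edges :: "'a::euclidean_space set set \<Rightarrow> 'a set set" where
  "map_edges M = {E \<in> M. dim E = 2}"

definition map_adjacent :: "'a::euclidean_space set set \<Rightarrow> 'a \<Rightarrow> 'a \<Rightarrow> bool" where
  "map_adjacent M v w \<longleftrightarrow> v \<in> map_vertices M \<and> w \<in> map_vertices M \<and>
     (\<exists>E\<in>map_edges M. v \<in> E \<and> w \<in> E)"

definition map_reach :: "'a::euclidean_space set set \<Rightarrow> 'a set \<Rightarrow> 'a set \<Rightarrow> nat \<Rightarrow> bool" where
  "map_reach M A B n \<longleftrightarrow>
     (\<exists>k\<le>n. \<exists>p :: nat \<Rightarrow> 'a. p 0 \<in> A \<and> p k \<in> B \<and>
        (\<forall>i\<le>k. p i \<in> map_vertices M) \<and>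
        (\<forall>i<k. map_adjacent M (p i) (p (Suc i))))"

end

theory Submission
  imports Defs
begin

lemma orth_set_dim:
  fixes N :: "'a::euclidean_space set"
  shows "dim {z. \<forall>n\<in>N. n \<bullet> z = 0} + dim N = DIM('a)"
proof -
  have eq: "{z. \<forall>n\<in>N. n \<bullet> z = 0} = {y \<in> UNIV. \<forall>x \<in> span N. orthogonal x y}"
  proof (intro set_eqI iffI)
    fix z assume "z \<in> {z. \<forall>n\<in>N. n \<bullet> z = 0}"
    then have "\<forall>n\<in>N. orthogonal z n" by (simp add: orthogonal_def inner_commute)
    then have "\<forall>x\<in>span N. orthogonal z x" using orthogonal_to_span by blast
    then show "z \<in> {y \<in> UNIV. \<forall>x \<in> span N. orthogonal x y}"
      by (simp add: orthogonal_commute)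
  next
    fix z assume "z \<in> {y \<in> UNIV. \<forall>x \<in> span N. orthogonal x y}"
    then show "z \<in> {z. \<forall>n\<in>N. n \<bullet> z = 0}" by (auto simp: orthogonal_def span_base)
  qed
  show ?thesis
    using dim_subspace_orthogonal_to_vectors[of "span N" UNIV] eq by simp
qed

lemma aff_dim_orth_set:
  fixes N :: "'a::euclidean_space set"
  shows "aff_dim {y. \<forall>n\<in>N. n \<bullet> y = n \<bullet> x0} = int DIM('a) - int (dim N)"
proof -
  let ?Z = "{z. \<forall>n\<in>N. n \<bullet> z = 0}"
  have "subspace ?Z" unfolding subspace_def by (simp add: inner_add_right)
  have eq: "{y. \<forall>n\<in>N. n \<bullet> y = n \<bullet> x0} = (+) x0 ` ?Z"
  proof (intro set_eqI iffI)
    fix y assume "y \<in> {y. \<forall>n\<in>N. n \<bullet> y = n \<bullet> x0}"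
    then have "y - x0 \<in> ?Z" by (simp add: inner_diff_right)
    then show "y \<in> (+) x0 ` ?Z" by (rule rev_image_eqI) simp
  next
    fix y assume "y \<in> (+) x0 ` ?Z"
    then show "y \<in> {y. \<forall>n\<in>N. n \<bullet> y = n \<bullet> x0}" by (auto simp: inner_add_right)
  qed
  have "aff_dim ?Z = int (dim ?Z)"
    by (rule aff_dim_subspace[OF \<open>subspace ?Z\<close>])
  moreover have "aff_dim ((+) x0 ` ?Z) = aff_dim ?Z" by (rule aff_dim_translation_eq)
  moreover have "int (dim ?Z) + int (dim N) = int DIM('a)"
    using arg_cong[OF orth_set_dim[of N], of int] by simp
  ultimately show ?thesis unfolding eq by linarith
qed

lemma normals_dim:
  fixes S :: "'a::euclidean_space set"
  assumes "x0 \<in> S"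
  shows "int (dim {n. \<forall>x\<in>S. n \<bullet> x = n \<bullet> x0}) = int DIM('a) - aff_dim S"
proof -
  let ?D = "(\<lambda>x. x - x0) ` S"
  have a: "aff_dim S = int (dim ?D)"
    using aff_dim_eq_dim_subtract[of x0 S] assms by (simp add: hull_inc)
  have "{n. \<forall>x\<in>S. n \<bullet> x = n \<bullet> x0} = {z. \<forall>n\<in>?D. n \<bullet> z = 0}"
    by (auto simp: inner_diff_right inner_commute)
  then show ?thesis using orth_set_dim[of ?D] a by simp
qed

lemma dep_of_orth:
  fixes F B :: "'a::euclidean_space set"
  assumes x0: "x0 \<in> F" and B: "subspace B" and FB: "\<And>z. z \<in> F \<Longrightarrow> z - x0 \<in> B"
    and dims: "aff_dim F + 1 = int (dim B)"
    and xB: "x \<in> B" and yB: "y \<in> B" and x0': "x \<noteq> 0"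
    and xc: "\<And>z. z \<in> F \<Longrightarrow> x \<bullet> z = x \<bullet> x0"
    and yc: "\<And>z. z \<in> F \<Longrightarrow> y \<bullet> z = y \<bullet> x0"
  shows "\<exists>l. y = l *\<^sub>R x"
proof (rule ccontr)
  assume nd: "\<not> (\<exists>l. y = l *\<^sub>R x)"
  let ?D = "(\<lambda>z. z - x0) ` F"
  let ?A = "span ?D"
  let ?O = "{w \<in> B. \<forall>a \<in> ?A. orthogonal a w}"
  have "?D \<subseteq> B" using FB by auto
  then have AB: "?A \<subseteq> B" using B by (rule span_minimal)
  have dA: "aff_dim F = int (dim ?A)"
    using aff_dim_eq_dim_subtract[of x0 F] x0 by (simp add: hull_inc)
  have "dim ?O + dim ?A = dim B"
    by (rule dim_subspace_orthogonal_to_vectors) (auto simp: B AB)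
  then have dO: "dim ?O = 1" using dA dims by linarith
  have orth: "w \<in> ?O" if "w \<in> B" "\<And>z. z \<in> F \<Longrightarrow> w \<bullet> z = w \<bullet> x0" for w
  proof -
    have "\<forall>a\<in>?D. orthogonal w a"
      using that(2) by (auto simp: orthogonal_def inner_diff_right)
    then have "\<forall>a\<in>?A. orthogonal w a"
      using orthogonal_to_span by blast
    then show ?thesis using that(1) by (simp add: orthogonal_commute)
  qed
  have sub: "{x, y} \<subseteq> ?O" using orth xB yB xc yc by auto
  have ind: "independent {x, y}"
  proof -
    have "y \<noteq> x" using nd by (metis scaleR_one)
    moreover have "y \<notin> span {x}" using nd by (auto simp: span_singleton)
    moreover have "x \<notin> span {}" using x0' by simp
    ultimately show ?thesis
      by (simp add: independent_insert insert_commute[of x y])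
  qed
  have "dim {x, y} \<le> dim ?O" by (rule dim_subset[OF sub])
  moreover have "dim {x, y} = 2"
    using ind dim_eq_card_independent nd by (metis card_2_iff scaleR_one)
  ultimately show False using dO by simp
qed

definition argmax_set :: "'a::euclidean_space set \<Rightarrow> 'a \<Rightarrow> 'a set" where
  "argmax_set P c = {x\<in>P. \<forall>y\<in>P. c \<bullet> y \<le> c \<bullet> x}"

lemma argmax_subset: "argmax_set P c \<subseteq> P"
  by (auto simp: argmax_set_def)

lemma argmax_nonempty:
  assumes "compact P" "P \<noteq> {}" shows "argmax_set P c \<noteq> {}"
proof -
  have "continuous_on P (\<lambda>x. c \<bullet> x)" by (intro continuous_intros)
  then obtain x where "x \<in> P" "\<forall>y\<in>P. c \<bullet> y \<le> c \<bullet> x"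
    using continuous_attains_sup[OF assms] by blast
  then show ?thesis by (auto simp: argmax_set_def)
qed

lemma argmax_face:
  assumes "convex P" shows "argmax_set P c face_of P"
proof (cases "argmax_set P c = {}")
  case True then show ?thesis by simp
next
  case False
  then obtain x0 where x0: "x0 \<in> argmax_set P c" by blast
  then have eq: "argmax_set P c = P \<inter> {x. c \<bullet> x = c \<bullet> x0}"
    by (auto simp: argmax_set_def intro: order.antisym)
  show ?thesis unfolding eq
    using x0 by (intro face_of_Int_supporting_hyperplane_le assms) (auto simp: argmax_set_def)
qed

lemma argmax_scale:
  assumes "l > 0" shows "argmax_set P (l *\<^sub>R c) = argmax_set P c"
  using assms by (auto simp: argmax_set_def)

lemma argmax_eq:
  assumes "x \<in> argmax_set P c" "y \<in> argmax_set P c" shows "c \<bullet> x = c \<bullet> y"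
proof -
  have "c \<bullet> y \<le> c \<bullet> x" "c \<bullet> x \<le> c \<bullet> y" using assms by (auto simp: argmax_set_def)
  then show ?thesis by linarith
qed

lemma argmax_const:
  assumes "x0 \<in> argmax_set P c" "x0 \<in> argmax_set P (- c)" "x \<in> P"
  shows "c \<bullet> x = c \<bullet> x0"
  using assms by (force simp: argmax_set_def)

lemma normal_cone_eq:
  assumes "F \<subseteq> P" shows "normal_cone L P F = {c\<in>L. F \<subseteq> argmax_set P c}"
  using assms by (auto simp: normal_cone_def argmax_set_def)

locale base =
  fixes P :: "'a::euclidean_space set" and u :: 'a and \<alpha> :: real
  assumes polyP: "polytope P" and u0: "u \<noteq> 0" and Pu: "\<And>x. x \<in> P \<Longrightarrow> u \<bullet> x = \<alpha>"
    and affP: "aff_dim P = int DIM('a) - 1"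
begin

definition "L = {c::'a. c \<bullet> u = 0}"
definition "Sph = unit_sphere_in L"

lemma Sph_iff: "c \<in> Sph \<longleftrightarrow> c \<bullet> u = 0 \<and> norm c = 1"
  by (simp add: Sph_def unit_sphere_in_def L_def)

lemma subspaceL: "subspace L"
  unfolding L_def subspace_def by (simp add: inner_add_left)

lemma dimL: "dim L = DIM('a) - 1"
proof -
  have "L = {x. u \<bullet> x = 0}" by (auto simp: L_def inner_commute)
  then show ?thesis using dim_hyperplane[OF u0] by simp
qed

lemma P_ne: "P \<noteq> {}"
proof
  assume "P = {}"
  then have "int DIM('a) - 1 = -1" using affP by simp
  then show False using DIM_positive[where 'a='a] by linarith
qed

lemma convP: "convex P" using polyP polytope_imp_convex by blast
lemma compP: "compact P" using polyP polytope_imp_compact by blast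
lemma polyhP: "polyhedron P" using polyP polytope_imp_polyhedron by blast

lemma B1:
  assumes cL: "c \<bullet> u = 0" and const: "\<And>x y. x \<in> P \<Longrightarrow> y \<in> P \<Longrightarrow> c \<bullet> x = c \<bullet> y"
  shows "c = 0"
proof (rule ccontr)
  assume c0: "c \<noteq> 0"
  obtain x0 where x0: "x0 \<in> P" using P_ne by blast
  have sub: "P \<subseteq> {y. \<forall>n\<in>{u, c}. n \<bullet> y = n \<bullet> x0}"
  proof
    fix y assume y: "y \<in> P"
    show "y \<in> {y. \<forall>n\<in>{u, c}. n \<bullet> y = n \<bullet> x0}"
      using Pu[OF y] Pu[OF x0] const[OF y x0] by simp
  qed
  have "c \<notin> span {u}"
  proof
    assume "c \<in> span {u}"
    then obtain k where k: "c = k *\<^sub>R u" by (auto simp: span_singleton)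
    then have "k * (u \<bullet> u) = 0" using cL by simp
    then have "k = 0" using u0 by simp
    then show False using k c0 by simp
  qed
  moreover have "u \<notin> span {}" using u0 by simp
  ultimately have ind: "independent {c, u}"
    by (simp add: independent_insert)
  have "c \<noteq> u" using cL u0 by auto
  then have "dim {u, c} = 2"
    using dim_eq_card_independent[OF ind] by (simp add: insert_commute)
  then have "aff_dim {y. \<forall>n\<in>{u, c}. n \<bullet> y = n \<bullet> x0} = int DIM('a) - 2"
    using aff_dim_orth_set[of "{u,c}" x0] by simp
  moreover have "aff_dim P \<le> aff_dim {y. \<forall>n\<in>{u, c}. n \<bullet> y = n \<bullet> x0}"
    using aff_dim_subset[OF sub] .
  ultimately show False using affP by simp
qed

lemma B5:
  assumes "c \<in> Sph"
  shows "argmax_set P c \<noteq> P" "argmax_set P c \<noteq> {}" "argmax_set P c face_of P"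
proof -
  show "argmax_set P c \<noteq> {}" using argmax_nonempty[OF compP P_ne] .
  show "argmax_set P c face_of P" using argmax_face[OF convP] .
  show "argmax_set P c \<noteq> P"
  proof
    assume eq: "argmax_set P c = P"
    have "c = 0"
    proof (rule B1)
      show "c \<bullet> u = 0" using assms by (simp add: Sph_iff)
      fix x y assume "x \<in> P" "y \<in> P"
      then show "c \<bullet> x = c \<bullet> y" using eq unfolding argmax_set_def by (auto intro: order.antisym)
    qed
    then show False using assms by (simp add: Sph_iff)
  qed
qed

lemma B2:
  assumes F: "F facet_of P" and c: "c \<in> Sph" and c': "c' \<in> Sph"
    and Fc: "F \<subseteq> argmax_set P c" and Fc': "F \<subseteq> argmax_set P c'"
  shows "c' = c"
proof -
  obtain x0 where x0: "x0 \<in> F" using F by (auto simp: facet_of_def)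
  have FP: "F \<subseteq> P" using F facet_of_imp_subset by blast
  have affF: "aff_dim F = int DIM('a) - 2" using F affP by (simp add: facet_of_def)
  have "aff_dim F \<ge> 0" using x0 aff_dim_negative_iff[of F] by (simp add: not_less[symmetric] del: aff_dim_negative_iff) blast
  then have "DIM('a) \<ge> 2" using affF by simp
  have "\<exists>l. c' = l *\<^sub>R c"
  proof (rule dep_of_orth[OF x0 subspaceL])
    show "z - x0 \<in> L" if "z \<in> F" for z
    proof -
      have "z \<in> P" "x0 \<in> P" using that x0 FP by auto
      then show ?thesis using Pu[of z] Pu[of x0] inner_commute[of z u] inner_commute[of x0 u]
        by (simp add: L_def inner_diff_left)
    qed
    show "aff_dim F + 1 = int (dim L)"
      using affF dimL \<open>DIM('a) \<ge> 2\<close> by simp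
    show "c \<in> L" "c' \<in> L" using c c' by (auto simp: Sph_iff L_def)
    show "c \<noteq> 0" using c by (auto simp: Sph_iff)
    show "c \<bullet> z = c \<bullet> x0" if "z \<in> F" for z
      using that x0 Fc argmax_eq by blast
    show "c' \<bullet> z = c' \<bullet> x0" if "z \<in> F" for z
      using that x0 Fc' argmax_eq by blast
  qed
  then obtain l where l: "c' = l *\<^sub>R c" by blast
  have "norm c' = \<bar>l\<bar> * norm c" using l by simp
  then have "\<bar>l\<bar> = 1" using c c' by (simp add: Sph_iff)
  then consider "l = 1" | "l = -1" by linarith
  then show ?thesis
  proof cases
    case 1 then show ?thesis using l by simp
  next
    case 2
    then have "x0 \<in> argmax_set P (- c)" using l x0 Fc' by auto
    moreover have "x0 \<in> argmax_set P c" using x0 Fc by auto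
    ultimately have cc: "c \<bullet> x = c \<bullet> x0" if "x \<in> P" for x
      using argmax_const that by blast
    have "c = 0"
      by (rule B1) (use c cc in \<open>auto simp: Sph_iff\<close>)
    then show ?thesis using c by (simp add: Sph_iff)
  qed
qed

lemma B4:
  assumes G: "G facet_of P"
  shows "\<exists>c\<in>Sph. G = argmax_set P c"
proof -
  obtain a \<beta> where a0: "a \<noteq> 0" and Pa: "P \<subseteq> {x. a \<bullet> x \<le> \<beta>}" and Geq: "G = P \<inter> {x. a \<bullet> x = \<beta>}"
    using facet_of_polyhedron[OF polyhP G] by blast
  define k where "k = (a \<bullet> u) / (u \<bullet> u)"
  define c0 where "c0 = a - k *\<^sub>R u"
  have c0u: "c0 \<bullet> u = 0" using u0 by (simp add: c0_def k_def inner_diff_left)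
  have ax: "a \<bullet> x = c0 \<bullet> x + k * \<alpha>" if "x \<in> P" for x
    using Pu[OF that] by (simp add: c0_def inner_diff_left)
  obtain x1 where x1: "x1 \<in> G" using G by (auto simp: facet_of_def)
  have x1P: "x1 \<in> P" and x1a: "a \<bullet> x1 = \<beta>" using x1 Geq by auto
  have G2: "G = argmax_set P c0"
  proof (intro set_eqI iffI)
    fix x assume x: "x \<in> G"
    then have xP: "x \<in> P" and "a \<bullet> x = \<beta>" using Geq by auto
    then have "c0 \<bullet> x = \<beta> - k * \<alpha>" using ax by simp
    moreover have "c0 \<bullet> y \<le> \<beta> - k * \<alpha>" if "y \<in> P" for y
      using Pa that ax[OF that] by auto
    ultimately show "x \<in> argmax_set P c0" using xP by (simp add: argmax_set_def)
  next
    fix x assume x: "x \<in> argmax_set P c0"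
    then have xP: "x \<in> P" and "c0 \<bullet> x1 \<le> c0 \<bullet> x" using x1P by (auto simp: argmax_set_def)
    then have "\<beta> \<le> a \<bullet> x" using ax[OF xP] ax[OF x1P] x1a by simp
    moreover have "a \<bullet> x \<le> \<beta>" using Pa xP by auto
    ultimately show "x \<in> G" using Geq xP by simp
  qed
  have "c0 \<noteq> 0"
  proof
    assume "c0 = 0"
    then have "argmax_set P c0 = P" by (simp add: argmax_set_def)
    then show False using G G2 by simp
  qed
  define c where "c = (1 / norm c0) *\<^sub>R c0"
  have "c \<in> Sph" using \<open>c0 \<noteq> 0\<close> c0u by (simp add: c_def Sph_iff)
  moreover have "argmax_set P c = argmax_set P c0"
    unfolding c_def by (rule argmax_scale) (use \<open>c0 \<noteq> 0\<close> in simp)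
  ultimately show ?thesis using G2 by auto
qed

lemma B3:
  assumes F: "F face_of P" "F \<noteq> {}" "F \<noteq> P" "\<not> F facet_of P"
  shows "\<exists>c1 c2. c1 \<in> Sph \<and> c2 \<in> Sph \<and> c1 \<noteq> c2 \<and> F \<subseteq> argmax_set P c1 \<and> F \<subseteq> argmax_set P c2"
proof -
  let ?FF = "{G. G facet_of P \<and> F \<subseteq> G}"
  have Feq: "F = \<Inter>?FF" using face_of_polyhedron[OF polyhP F(1-3)] .
  have "\<exists>G1 G2. G1 \<in> ?FF \<and> G2 \<in> ?FF \<and> G1 \<noteq> G2"
  proof (rule ccontr)
    assume "\<not> ?thesis"
    then have sub: "\<And>G1 G2. G1 \<in> ?FF \<Longrightarrow> G2 \<in> ?FF \<Longrightarrow> G1 = G2" by blast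
    show False
    proof (cases "?FF = {}")
      case True
      then have "F = UNIV" using Feq by (metis Inter_empty)
      then have "P = UNIV" using F(1) face_of_imp_subset by blast
      then show False using affP by simp
    next
      case False
      then obtain G1 where G1: "G1 \<in> ?FF" by blast
      then have "?FF = {G1}" using sub by blast
      then have "F = G1" using Feq by simp
      then show False using G1 F(4) by simp
    qed
  qed
  then obtain G1 G2 where G1: "G1 \<in> ?FF" and G2: "G2 \<in> ?FF" and G12: "G1 \<noteq> G2" by blast
  obtain c1 where c1: "c1 \<in> Sph" "G1 = argmax_set P c1" using B4 G1 by blast
  obtain c2 where c2: "c2 \<in> Sph" "G2 = argmax_set P c2" using B4 G2 by blast
  show ?thesis
    by (rule exI[of _ c1], rule exI[of _ c2]) (use c1 c2 G1 G2 G12 in auto)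
qed

lemma B6:
  assumes c: "c \<in> Sph"
  shows "argmax_set P c facet_of P \<longleftrightarrow> {c'\<in>Sph. argmax_set P c \<subseteq> argmax_set P c'} = {c}"
proof
  assume F: "argmax_set P c facet_of P"
  show "{c'\<in>Sph. argmax_set P c \<subseteq> argmax_set P c'} = {c}"
    using B2[OF F c] c by blast
next
  assume sing: "{c'\<in>Sph. argmax_set P c \<subseteq> argmax_set P c'} = {c}"
  show "argmax_set P c facet_of P"
  proof (rule ccontr)
    assume "\<not> argmax_set P c facet_of P"
    then obtain c1 c2 where "c1 \<in> Sph" "c2 \<in> Sph" "c1 \<noteq> c2"
      "argmax_set P c \<subseteq> argmax_set P c1" "argmax_set P c \<subseteq> argmax_set P c2"
      using B3 B5[OF c] by blast
    then have "c1 \<in> {c'\<in>Sph. argmax_set P c \<subseteq> argmax_set P c'}"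
      "c2 \<in> {c'\<in>Sph. argmax_set P c \<subseteq> argmax_set P c'}" by auto
    then have "c1 = c" "c2 = c" using sing by auto
    then show False using \<open>c1 \<noteq> c2\<close> by simp
  qed
qed

lemma B7:
  "c \<in> map_vertices (geodesic_map L P) \<longleftrightarrow> c \<in> Sph \<and> argmax_set P c facet_of P"
proof
  assume "c \<in> map_vertices (geodesic_map L P)"
  then obtain F where F: "F face_of P" "F \<noteq> {}" and eq: "{c} = normal_cone L P F \<inter> unit_sphere_in L"
    by (auto simp: map_vertices_def geodesic_map_def)
  have FP: "F \<subseteq> P" using F face_of_imp_subset by blast
  have eq2: "{c} = {c'\<in>Sph. F \<subseteq> argmax_set P c'}"
    using eq normal_cone_eq[OF FP, of L] by (auto simp: Sph_def unit_sphere_in_def)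
  then have cS: "c \<in> Sph" and Fc: "F \<subseteq> argmax_set P c" by auto
  have "{c'\<in>Sph. argmax_set P c \<subseteq> argmax_set P c'} = {c}"
    using eq2 Fc cS by blast
  then show "c \<in> Sph \<and> argmax_set P c facet_of P" using B6[OF cS] cS by simp
next
  assume c: "c \<in> Sph \<and> argmax_set P c facet_of P"
  then have sing: "{c'\<in>Sph. argmax_set P c \<subseteq> argmax_set P c'} = {c}" using B6 by blast
  have "{c} = normal_cone L P (argmax_set P c) \<inter> unit_sphere_in L"
    using sing normal_cone_eq[OF argmax_subset, of L P c] by (auto simp: Sph_def unit_sphere_in_def)
  then have "{c} \<in> geodesic_map L P"
    unfolding geodesic_map_def using B5[of c] c by blast
  then show "c \<in> map_vertices (geodesic_map L P)"
    by (simp add: map_vertices_def)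
qed

end

lemma two_facets:
  fixes P F :: "'a::euclidean_space set"
  assumes "polyhedron P" "F face_of P" "F \<noteq> {}" "F \<noteq> P" "\<not> F facet_of P" "P \<noteq> UNIV"
  shows "\<exists>G1 G2. G1 facet_of P \<and> G2 facet_of P \<and> F \<subseteq> G1 \<and> F \<subseteq> G2 \<and> G1 \<noteq> G2"
proof -
  let ?FF = "{G. G facet_of P \<and> F \<subseteq> G}"
  have Feq: "F = \<Inter>?FF" using face_of_polyhedron[OF assms(1-4)] .
  have "\<exists>G1 G2. G1 \<in> ?FF \<and> G2 \<in> ?FF \<and> G1 \<noteq> G2"
  proof (rule ccontr)
    assume "\<not> ?thesis"
    then have sub: "\<And>G1 G2. G1 \<in> ?FF \<Longrightarrow> G2 \<in> ?FF \<Longrightarrow> G1 = G2" by blast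
    show False
    proof (cases "?FF = {}")
      case True
      then have "F = UNIV" using Feq by (metis Inter_empty)
      then have "P = UNIV" using assms(2) face_of_imp_subset by blast
      then show False using assms(6) by simp
    next
      case False
      then obtain G1 where G1: "G1 \<in> ?FF" by blast
      then have "?FF = {G1}" using sub by blast
      then have "F = G1" using Feq by simp
      then show False using G1 assms(5) by simp
    qed
  qed
  then show ?thesis by blast
qed

locale prism =
  fixes Q Qp Qm :: "'a::euclidean_space set" and u :: 'a and a b :: real
  assumes dim2: "DIM('a) \<ge> 2" and affQ: "aff_dim Q = int DIM('a)"
    and pr: "prismatoid Q Qp Qm u a b"
begin

lemma polyQ: "polytope Q" and Qpf: "Qp facet_of Q" and Qmf: "Qm facet_of Q" and Qpm: "Qp \<noteq> Qm"
  and ext: "\<And>x. x extreme_point_of Q \<Longrightarrow> x \<in> Qp \<union> Qm" and u0: "u \<noteq> 0"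
  and Qpu: "\<And>x. x \<in> Qp \<Longrightarrow> u \<bullet> x = a" and Qmu: "\<And>x. x \<in> Qm \<Longrightarrow> u \<bullet> x = b"
  using pr by (auto simp: prismatoid_def)

lemma convQ: "convex Q" using polyQ polytope_imp_convex by blast
lemma compQ: "compact Q" using polyQ polytope_imp_compact by blast
lemma polyhQ: "polyhedron Q" using polyQ polytope_imp_polyhedron by blast
lemma QpQ: "Qp \<subseteq> Q" using Qpf facet_of_imp_subset by blast
lemma QmQ: "Qm \<subseteq> Q" using Qmf facet_of_imp_subset by blast
lemma convQp: "convex Qp" using Qpf facet_of_imp_face_of face_of_imp_convex by blast
lemma convQm: "convex Qm" using Qmf facet_of_imp_face_of face_of_imp_convex by blast

lemma baseP: "base Qp u a"
proof
  show "polytope Qp" using face_of_polytope_polytope[OF polyQ] Qpf facet_of_imp_face_of by blast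
  show "u \<noteq> 0" by (rule u0)
  show "u \<bullet> x = a" if "x \<in> Qp" for x using Qpu that .
  show "aff_dim Qp = int DIM('a) - 1" using Qpf affQ by (simp add: facet_of_def)
qed

lemma baseM: "base Qm u b"
proof
  show "polytope Qm" using face_of_polytope_polytope[OF polyQ] Qmf facet_of_imp_face_of by blast
  show "u \<noteq> 0" by (rule u0)
  show "u \<bullet> x = b" if "x \<in> Qm" for x using Qmu that .
  show "aff_dim Qm = int DIM('a) - 1" using Qmf affQ by (simp add: facet_of_def)
qed

definition "L = {c::'a. c \<bullet> u = 0}"
definition "Sph = unit_sphere_in L"

lemma LP: "base.L u = L" by (simp add: base.L_def[OF baseP] L_def)
lemma SphP: "base.Sph u = Sph" by (simp add: base.Sph_def[OF baseP] LP Sph_def)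

lemma Sph_iff: "c \<in> Sph \<longleftrightarrow> c \<bullet> u = 0 \<and> norm c = 1"
  by (simp add: Sph_def unit_sphere_in_def L_def)

lemma Q_hull: "Q = convex hull (Qp \<union> Qm)"
proof
  have "Q = convex hull {x. x extreme_point_of Q}"
    by (rule Krein_Milman_Minkowski[OF compQ convQ])
  also have "\<dots> \<subseteq> convex hull (Qp \<union> Qm)" using ext by (intro hull_mono) auto
  finally show "Q \<subseteq> convex hull (Qp \<union> Qm)" .
  show "convex hull (Qp \<union> Qm) \<subseteq> Q" using QpQ QmQ convQ by (intro hull_minimal) auto
qed

lemma ab: "a \<noteq> b"
proof
  assume ab: "a = b"
  have "Qp \<union> Qm \<subseteq> {x. u \<bullet> x = a}" using Qpu Qmu ab by auto
  then have "Q \<subseteq> {x. u \<bullet> x = a}" unfolding Q_hull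
    by (intro hull_minimal) (auto simp: convex_hyperplane)
  then have "aff_dim Q \<le> aff_dim {x. u \<bullet> x = a}" by (rule aff_dim_subset)
  then show False using affQ u0 by simp
qed

lemma disj: "Qp \<inter> Qm = {}"
  using Qpu Qmu ab by fastforce

lemma face_hull:
  assumes F: "F face_of Q" shows "F = convex hull ((F \<inter> Qp) \<union> (F \<inter> Qm))"
proof
  have cF: "convex F" using F face_of_imp_convex by blast
  have kF: "compact F" using face_of_imp_compact[OF convQ compQ F] .
  have "F = convex hull {x. x extreme_point_of F}"
    by (rule Krein_Milman_Minkowski[OF kF cF])
  also have "\<dots> \<subseteq> convex hull ((F \<inter> Qp) \<union> (F \<inter> Qm))"
  proof (intro hull_mono subsetI)
    fix x assume "x \<in> {x. x extreme_point_of F}"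
    then have "x extreme_point_of Q" "x \<in> F" using extreme_point_of_face[OF F] by auto
    then show "x \<in> (F \<inter> Qp) \<union> (F \<inter> Qm)" using ext by auto
  qed
  finally show "F \<subseteq> convex hull ((F \<inter> Qp) \<union> (F \<inter> Qm))" .
  show "convex hull ((F \<inter> Qp) \<union> (F \<inter> Qm)) \<subseteq> F" using cF by (intro hull_minimal) auto
qed

lemma side_meets:
  assumes F: "F facet_of Q" and "F \<noteq> Qp" shows "F \<inter> Qm \<noteq> {}"
proof
  assume e: "F \<inter> Qm = {}"
  have Ff: "F face_of Q" using F facet_of_imp_face_of by blast
  have "F = convex hull (F \<inter> Qp)" using face_hull[OF Ff] e by simp
  also have "\<dots> \<subseteq> Qp" using convQp by (intro hull_minimal) auto
  finally have FQp: "F \<subseteq> Qp" .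
  have "F face_of Qp" using face_of_subset[OF Ff FQp QpQ] .
  then have "aff_dim F < aff_dim Qp" using face_of_aff_dim_lt[OF convQp] assms(2) by blast
  then show False using F Qpf by (simp add: facet_of_def)
qed

lemma side_meets':
  assumes F: "F facet_of Q" and "F \<noteq> Qm" shows "F \<inter> Qp \<noteq> {}"
proof
  assume e: "F \<inter> Qp = {}"
  have Ff: "F face_of Q" using F facet_of_imp_face_of by blast
  have "F = convex hull (F \<inter> Qm)" using face_hull[OF Ff] e by simp
  also have "\<dots> \<subseteq> Qm" using convQm by (intro hull_minimal) auto
  finally have FQm: "F \<subseteq> Qm" .
  have "F face_of Qm" using face_of_subset[OF Ff FQm QmQ] .
  then have "aff_dim F < aff_dim Qm" using face_of_aff_dim_lt[OF convQm] assms(2) by blast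
  then show False using F Qmf by (simp add: facet_of_def)
qed

definition "Fp c = argmax_set Qp c"
definition "Fm c = argmax_set Qm c"
definition "hp c = c \<bullet> (SOME x. x \<in> Fp c)"
definition "hm c = c \<bullet> (SOME x. x \<in> Fm c)"
definition "tt c = (hm c - hp c) / (a - b)"
definition "nv c = c + tt c *\<^sub>R u"
definition "MM c = hp c + tt c * a"
definition "G c = convex hull (Fp c \<union> Fm c)"
definition "prj x = x - ((x \<bullet> u) / (u \<bullet> u)) *\<^sub>R u"

lemma Fp_ne: "Fp c \<noteq> {}" unfolding Fp_def
  using argmax_nonempty base.compP[OF baseP] base.P_ne[OF baseP] by blast
lemma Fm_ne: "Fm c \<noteq> {}" unfolding Fm_def
  using argmax_nonempty base.compP[OF baseM] base.P_ne[OF baseM] by blast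

lemma hp: "x \<in> Fp c \<Longrightarrow> c \<bullet> x = hp c" "y \<in> Qp \<Longrightarrow> c \<bullet> y \<le> hp c"
proof -
  have s: "(SOME x. x \<in> Fp c) \<in> Fp c" using Fp_ne some_in_eq by blast
  show "x \<in> Fp c \<Longrightarrow> c \<bullet> x = hp c" using argmax_eq s unfolding hp_def Fp_def by blast
  show "y \<in> Qp \<Longrightarrow> c \<bullet> y \<le> hp c" using s unfolding hp_def Fp_def argmax_set_def by blast
qed

lemma hm: "x \<in> Fm c \<Longrightarrow> c \<bullet> x = hm c" "y \<in> Qm \<Longrightarrow> c \<bullet> y \<le> hm c"
proof -
  have s: "(SOME x. x \<in> Fm c) \<in> Fm c" using Fm_ne some_in_eq by blast
  show "x \<in> Fm c \<Longrightarrow> c \<bullet> x = hm c" using argmax_eq s unfolding hm_def Fm_def by blast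
  show "y \<in> Qm \<Longrightarrow> c \<bullet> y \<le> hm c" using s unfolding hm_def Fm_def argmax_set_def by blast
qed

lemma Fp_iff: "x \<in> Fp c \<longleftrightarrow> x \<in> Qp \<and> c \<bullet> x = hp c"
  using hp unfolding Fp_def argmax_set_def by fastforce
lemma Fm_iff: "x \<in> Fm c \<longleftrightarrow> x \<in> Qm \<and> c \<bullet> x = hm c"
  using hm unfolding Fm_def argmax_set_def by fastforce

lemma MM2: "MM c = hm c + tt c * b"
proof -
  have "tt c * (a - b) = hm c - hp c" using ab by (simp add: tt_def)
  then show ?thesis by (simp add: MM_def algebra_simps)
qed

lemma nvp: "c \<bullet> u = 0 \<Longrightarrow> x \<in> Qp \<Longrightarrow> nv c \<bullet> x = c \<bullet> x + tt c * a"
  using Qpu by (simp add: nv_def inner_add_left)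
lemma nvm: "c \<bullet> u = 0 \<Longrightarrow> x \<in> Qm \<Longrightarrow> nv c \<bullet> x = c \<bullet> x + tt c * b"
  using Qmu by (simp add: nv_def inner_add_left)

lemma nv_le:
  assumes c: "c \<bullet> u = 0" shows "Q \<subseteq> {x. nv c \<bullet> x \<le> MM c}"
  unfolding Q_hull
proof (intro hull_minimal)
  show "convex {x. nv c \<bullet> x \<le> MM c}" by (rule convex_halfspace_le)
  show "Qp \<union> Qm \<subseteq> {x. nv c \<bullet> x \<le> MM c}"
  proof
    fix x assume "x \<in> Qp \<union> Qm"
    then show "x \<in> {x. nv c \<bullet> x \<le> MM c}"
    proof
      assume x: "x \<in> Qp" then show ?thesis using nvp[OF c x] hp(2)[OF x, of c] by (simp add: MM_def)
    next
      assume x: "x \<in> Qm" then show ?thesis using nvm[OF c x] hm(2)[OF x, of c] by (simp add: MM2)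
    qed
  qed
qed

lemma Z_Qp:
  assumes c: "c \<bullet> u = 0" shows "(Q \<inter> {x. nv c \<bullet> x = MM c}) \<inter> Qp = Fp c"
proof (intro set_eqI iffI)
  fix x assume x: "x \<in> (Q \<inter> {x. nv c \<bullet> x = MM c}) \<inter> Qp"
  then have "x \<in> Qp" "nv c \<bullet> x = MM c" by auto
  then show "x \<in> Fp c" using nvp[OF c, of x] by (simp add: Fp_iff MM_def)
next
  fix x assume "x \<in> Fp c"
  then have x: "x \<in> Qp" "c \<bullet> x = hp c" using Fp_iff by auto
  then show "x \<in> (Q \<inter> {x. nv c \<bullet> x = MM c}) \<inter> Qp" using nvp[OF c x(1)] QpQ by (auto simp: MM_def)
qed

lemma Z_Qm:
  assumes c: "c \<bullet> u = 0" shows "(Q \<inter> {x. nv c \<bullet> x = MM c}) \<inter> Qm = Fm c"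
proof (intro set_eqI iffI)
  fix x assume x: "x \<in> (Q \<inter> {x. nv c \<bullet> x = MM c}) \<inter> Qm"
  then have "x \<in> Qm" "nv c \<bullet> x = MM c" by auto
  then show "x \<in> Fm c" using nvm[OF c, of x] by (simp add: Fm_iff MM2)
next
  fix x assume "x \<in> Fm c"
  then have x: "x \<in> Qm" "c \<bullet> x = hm c" using Fm_iff by auto
  then show "x \<in> (Q \<inter> {x. nv c \<bullet> x = MM c}) \<inter> Qm" using nvm[OF c x(1)] QmQ by (auto simp: MM2)
qed

lemma Z_face: "c \<bullet> u = 0 \<Longrightarrow> (Q \<inter> {x. nv c \<bullet> x = MM c}) face_of Q"
  using nv_le by (intro face_of_Int_supporting_hyperplane_le convQ) auto

lemma G_exp:
  assumes c: "c \<bullet> u = 0" shows "G c = Q \<inter> {x. nv c \<bullet> x = MM c}"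
  using face_hull[OF Z_face[OF c]] Z_Qp[OF c] Z_Qm[OF c] by (simp add: G_def)

lemma G_face: "c \<bullet> u = 0 \<Longrightarrow> G c face_of Q"
  using G_exp Z_face by simp

lemma G_Qp: "c \<bullet> u = 0 \<Longrightarrow> G c \<inter> Qp = Fp c"
  using G_exp Z_Qp by simp
lemma G_Qm: "c \<bullet> u = 0 \<Longrightarrow> G c \<inter> Qm = Fm c"
  using G_exp Z_Qm by simp

lemma G_const: "c \<bullet> u = 0 \<Longrightarrow> x \<in> G c \<Longrightarrow> nv c \<bullet> x = MM c"
  using G_exp by auto

lemma G_conv: "convex (G c)" by (simp add: G_def)

lemma G_sub:
  assumes "c \<bullet> u = 0" "c' \<bullet> u = 0"
  shows "G c \<subseteq> G c' \<longleftrightarrow> Fp c \<subseteq> Fp c' \<and> Fm c \<subseteq> Fm c'"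
proof
  assume s: "G c \<subseteq> G c'"
  have "G c \<inter> Qp \<subseteq> G c' \<inter> Qp" "G c \<inter> Qm \<subseteq> G c' \<inter> Qm" using s by auto
  then show "Fp c \<subseteq> Fp c' \<and> Fm c \<subseteq> Fm c'" by (simp add: G_Qp G_Qm assms)
next
  assume "Fp c \<subseteq> Fp c' \<and> Fm c \<subseteq> Fm c'"
  then have "Fp c \<union> Fm c \<subseteq> G c'" unfolding G_def[of c'] by (meson hull_subset subset_trans Un_mono)
  then show "G c \<subseteq> G c'" unfolding G_def[of c] using G_conv by (intro hull_minimal) auto
qed

lemma linear_prj: "linear prj"
proof (rule linearI)
  fix x y :: 'a and r :: real
  show "prj (x + y) = prj x + prj y"
    by (simp add: prj_def inner_add_left add_divide_distrib scaleR_add_left algebra_simps)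
  show "prj (r *\<^sub>R x) = r *\<^sub>R prj x"
    by (simp add: prj_def algebra_simps)
qed

lemma prj_u: "prj x \<bullet> u = 0"
  using u0 by (simp add: prj_def inner_diff_left)

lemma prj_L: "c \<bullet> u = 0 \<Longrightarrow> prj c = c"
  by (simp add: prj_def)

lemma prj_nv: "c \<bullet> u = 0 \<Longrightarrow> prj (nv c) = c"
  using u0 by (simp add: prj_def nv_def inner_add_left algebra_simps)

lemma prj_zero: "prj x = 0 \<Longrightarrow> x = ((x \<bullet> u) / (u \<bullet> u)) *\<^sub>R u"
  by (simp add: prj_def)

lemma Sph_u: "c \<in> Sph \<Longrightarrow> c \<bullet> u = 0" by (simp add: Sph_iff)
lemma Sph_0: "c \<in> Sph \<Longrightarrow> c \<noteq> 0" by (auto simp: Sph_iff)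

lemma Fp_scale: "l > 0 \<Longrightarrow> Fp (l *\<^sub>R c) = Fp c" by (simp add: Fp_def argmax_scale)
lemma Fm_scale: "l > 0 \<Longrightarrow> Fm (l *\<^sub>R c) = Fm c" by (simp add: Fm_def argmax_scale)

lemma Fp_face: "Fp c face_of Qp" unfolding Fp_def by (rule argmax_face[OF convQp])
lemma Fm_face: "Fm c face_of Qm" unfolding Fm_def by (rule argmax_face[OF convQm])

lemma Fp_sub: "Fp c \<subseteq> Qp" by (simp add: Fp_def argmax_subset)
lemma Fm_sub: "Fm c \<subseteq> Qm" by (simp add: Fm_def argmax_subset)

lemma antipodal_p:
  assumes "x0 \<in> Fp c" "x0 \<in> Fp (- c)" "c \<bullet> u = 0" shows "c = 0"
proof (rule base.B1[OF baseP])
  show "c \<bullet> u = 0" by fact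
  fix x y assume "x \<in> Qp" "y \<in> Qp"
  then show "c \<bullet> x = c \<bullet> y" using argmax_const[of x0 Qp c] assms by (simp add: Fp_def)
qed

lemma antipodal_m:
  assumes "x0 \<in> Fm c" "x0 \<in> Fm (- c)" "c \<bullet> u = 0" shows "c = 0"
proof (rule base.B1[OF baseM])
  show "c \<bullet> u = 0" by fact
  fix x y assume "x \<in> Qm" "y \<in> Qm"
  then show "c \<bullet> x = c \<bullet> y" using argmax_const[of x0 Qm c] assms by (simp add: Fm_def)
qed

lemma G_ne_Q: assumes "c \<in> Sph" shows "G c \<noteq> Q"
proof
  assume "G c = Q"
  then have "Fp c = Qp" using G_Qp[OF Sph_u[OF assms]] QpQ by auto
  then show False using base.B5(1)[OF baseP, of c] assms SphP by (simp add: Fp_def)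
qed

lemma G_meets: assumes "c \<bullet> u = 0" shows "G c \<inter> Qp \<noteq> {}" "G c \<inter> Qm \<noteq> {}"
  using G_Qp[OF assms] G_Qm[OF assms] Fp_ne Fm_ne by auto

lemma SFgen:
  assumes F: "F facet_of Q" "F \<noteq> Qp" "F \<noteq> Qm" and a0: "a' \<noteq> 0"
    and Qa: "Q \<subseteq> {x. a' \<bullet> x \<le> \<beta>}" and Feq: "F = Q \<inter> {x. a' \<bullet> x = \<beta>}"
  shows "prj a' \<noteq> 0" "F \<inter> Qp = Fp (prj a')" "F \<inter> Qm = Fm (prj a')"
proof -
  define k where "k = (a' \<bullet> u) / (u \<bullet> u)"
  define c0 where "c0 = prj a'"
  have c0: "c0 = a' - k *\<^sub>R u" by (simp add: c0_def prj_def k_def)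
  have axp: "a' \<bullet> x = c0 \<bullet> x + k * a" if "x \<in> Qp" for x
    using Qpu[OF that] by (simp add: c0 inner_diff_left)
  have axm: "a' \<bullet> x = c0 \<bullet> x + k * b" if "x \<in> Qm" for x
    using Qmu[OF that] by (simp add: c0 inner_diff_left)
  obtain x1 where x1: "x1 \<in> F \<inter> Qp" using side_meets'[OF F(1,3)] by blast
  obtain x2 where x2: "x2 \<in> F \<inter> Qm" using side_meets[OF F(1,2)] by blast
  have x1v: "c0 \<bullet> x1 = \<beta> - k * a" using x1 Feq axp by auto
  have x2v: "c0 \<bullet> x2 = \<beta> - k * b" using x2 Feq axm by auto
  show "F \<inter> Qp = Fp (prj a')"
  proof (intro set_eqI iffI)
    fix x assume x: "x \<in> F \<inter> Qp"
    then have "c0 \<bullet> x = \<beta> - k * a" using Feq axp by auto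
    moreover have "c0 \<bullet> y \<le> \<beta> - k * a" if "y \<in> Qp" for y
      using Qa QpQ that axp[OF that] by auto
    ultimately show "x \<in> Fp (prj a')" using x by (auto simp: Fp_def argmax_set_def c0_def[symmetric])
  next
    fix x assume x: "x \<in> Fp (prj a')"
    then have xP: "x \<in> Qp" and "c0 \<bullet> x1 \<le> c0 \<bullet> x" using x1 by (auto simp: Fp_def argmax_set_def c0_def)
    then have "\<beta> \<le> a' \<bullet> x" using axp[OF xP] x1v by simp
    moreover have "a' \<bullet> x \<le> \<beta>" using Qa QpQ xP by auto
    ultimately show "x \<in> F \<inter> Qp" using Feq xP QpQ by auto
  qed
  show "F \<inter> Qm = Fm (prj a')"
  proof (intro set_eqI iffI)
    fix x assume x: "x \<in> F \<inter> Qm"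
    then have "c0 \<bullet> x = \<beta> - k * b" using Feq axm by auto
    moreover have "c0 \<bullet> y \<le> \<beta> - k * b" if "y \<in> Qm" for y
      using Qa QmQ that axm[OF that] by auto
    ultimately show "x \<in> Fm (prj a')" using x by (auto simp: Fm_def argmax_set_def c0_def[symmetric])
  next
    fix x assume x: "x \<in> Fm (prj a')"
    then have xP: "x \<in> Qm" and "c0 \<bullet> x2 \<le> c0 \<bullet> x" using x2 by (auto simp: Fm_def argmax_set_def c0_def)
    then have "\<beta> \<le> a' \<bullet> x" using axm[OF xP] x2v by simp
    moreover have "a' \<bullet> x \<le> \<beta>" using Qa QmQ xP by auto
    ultimately show "x \<in> F \<inter> Qm" using Feq xP QmQ by auto
  qed
  show "prj a' \<noteq> 0"
  proof
    assume "prj a' = 0"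
    then have "c0 = 0" by (simp add: c0_def)
    then have "k * a = k * b" using x1v x2v by simp
    then have "k = 0" using ab by simp
    then have "a' = 0" using \<open>c0 = 0\<close> c0 by simp
    then show False using a0 by simp
  qed
qed

lemma SF:
  assumes F: "F facet_of Q" "F \<noteq> Qp" "F \<noteq> Qm"
  shows "\<exists>c\<in>Sph. F = G c"
proof -
  obtain a' \<beta> where a0: "a' \<noteq> 0" and Qa: "Q \<subseteq> {x. a' \<bullet> x \<le> \<beta>}" and Feq: "F = Q \<inter> {x. a' \<bullet> x = \<beta>}"
    using facet_of_polyhedron[OF polyhQ F(1)] by blast
  note s = SFgen[OF F a0 Qa Feq]
  define c where "c = (1 / norm (prj a')) *\<^sub>R prj a'"
  have cS: "c \<in> Sph" using s(1) prj_u by (simp add: c_def Sph_iff inner_commute)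
  have "Fp c = Fp (prj a')" "Fm c = Fm (prj a')" unfolding c_def using s(1)
    by (simp_all add: Fp_scale Fm_scale)
  then have "G c = convex hull ((F \<inter> Qp) \<union> (F \<inter> Qm))" using s by (simp add: G_def)
  also have "\<dots> = F" using face_hull F(1) facet_of_imp_face_of by metis
  finally show ?thesis using cS by auto
qed

definition "NS c = {c'\<in>Sph. G c \<subseteq> G c'}"

lemma V1:
  assumes c: "c \<in> Sph" and Gf: "G c facet_of Q" and c': "c' \<in> Sph" and sub: "G c \<subseteq> G c'"
  shows "c' = c"
proof -
  have cu: "c \<bullet> u = 0" and cu': "c' \<bullet> u = 0" using c c' by (auto simp: Sph_iff)
  have eq: "G c = G c'"
  proof (rule ccontr)
    assume ne: "G c \<noteq> G c'"
    have f1: "G c face_of G c'" using face_of_subset[OF G_face[OF cu] sub] G_face[OF cu'] face_of_imp_subset by blast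
    have "aff_dim (G c) < aff_dim (G c')"
      using face_of_aff_dim_lt[OF G_conv f1 ne] .
    moreover have "aff_dim (G c') < aff_dim Q"
      using face_of_aff_dim_lt[OF convQ G_face[OF cu'] G_ne_Q[OF c']] .
    ultimately show False using Gf affQ by (simp add: facet_of_def)
  qed
  obtain x0 where x0: "x0 \<in> G c" using Gf by (auto simp: facet_of_def)
  have nv0: "nv c \<noteq> 0"
  proof
    assume "nv c = 0"
    then have "prj (nv c) = 0" using linear_0[OF linear_prj] by simp
    then show False using prj_nv[OF cu] Sph_0[OF c] by simp
  qed
  have "\<exists>l. nv c' = l *\<^sub>R nv c"
  proof (rule dep_of_orth[OF x0 subspace_UNIV])
    show "z - x0 \<in> UNIV" for z by simp
    show "aff_dim (G c) + 1 = int (dim (UNIV::'a set))" using Gf affQ by (simp add: facet_of_def)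
    show "nv c \<in> UNIV" "nv c' \<in> UNIV" by auto
    show "nv c \<noteq> 0" by (rule nv0)
    show "nv c \<bullet> z = nv c \<bullet> x0" if "z \<in> G c" for z using G_const[OF cu] that x0 by simp
    show "nv c' \<bullet> z = nv c' \<bullet> x0" if "z \<in> G c" for z using G_const[OF cu'] that x0 eq by simp
  qed
  then obtain l where l: "nv c' = l *\<^sub>R nv c" by blast
  have "c' = l *\<^sub>R c"
  proof -
    have "c' = prj (nv c')" using prj_nv[OF cu'] by simp
    also have "\<dots> = l *\<^sub>R prj (nv c)" using l linear_cmul[OF linear_prj] by simp
    also have "\<dots> = l *\<^sub>R c" using prj_nv[OF cu] by simp
    finally show ?thesis .
  qed
  then have "norm c' = \<bar>l\<bar> * norm c" by simp
  then have "\<bar>l\<bar> = 1" using c c' by (simp add: Sph_iff)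
  then consider "l = 1" | "l = -1" by linarith
  then show ?thesis
  proof cases
    case 1 then show ?thesis using \<open>c' = l *\<^sub>R c\<close> by simp
  next
    case 2
    then have "Fp c \<subseteq> Fp (- c)" using G_sub[OF cu cu'] sub \<open>c' = l *\<^sub>R c\<close> by simp
    moreover obtain y where "y \<in> Fp c" using Fp_ne by blast
    ultimately have "c = 0" using antipodal_p cu by blast
    then show ?thesis using Sph_0[OF c] by simp
  qed
qed

lemma V:
  assumes c: "c \<in> Sph"
  shows "G c facet_of Q \<longleftrightarrow> NS c = {c}"
proof
  assume "G c facet_of Q"
  then show "NS c = {c}" using V1[OF c] c by (auto simp: NS_def)
next
  assume sing: "NS c = {c}"
  show "G c facet_of Q"
  proof (rule ccontr)
    assume nf: "\<not> G c facet_of Q"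
    have cu: "c \<bullet> u = 0" using c Sph_u by blast
    have "G c \<noteq> {}" using G_meets[OF cu] by blast
    moreover have "Q \<noteq> UNIV" using compQ compact_imp_bounded not_bounded_UNIV by blast
    ultimately obtain G1 G2 where G: "G1 facet_of Q" "G2 facet_of Q" "G c \<subseteq> G1" "G c \<subseteq> G2" "G1 \<noteq> G2"
      using two_facets[OF polyhQ G_face[OF cu] _ G_ne_Q[OF c] nf] by blast
    have side: "Gi \<noteq> Qp \<and> Gi \<noteq> Qm" if "G c \<subseteq> Gi" for Gi
      using that G_meets[OF cu] disj by blast
    obtain c1 where c1: "c1 \<in> Sph" "G1 = G c1" using SF G(1) side[OF G(3)] by blast
    obtain c2 where c2: "c2 \<in> Sph" "G2 = G c2" using SF G(2) side[OF G(4)] by blast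
    have "c1 \<in> NS c" "c2 \<in> NS c" using c1 c2 G by (auto simp: NS_def)
    then have "c1 = c2" using sing by simp
    then show False using c1 c2 G(5) by simp
  qed
qed

definition "Rf = common_refinement (geodesic_map L Qp) (geodesic_map L Qm)"

lemma geo_p:
  "C \<in> geodesic_map L Qp \<longleftrightarrow> C \<noteq> {} \<and> (\<exists>F. F face_of Qp \<and> F \<noteq> {} \<and> C = {c\<in>Sph. F \<subseteq> Fp c})"
proof -
  have "normal_cone L Qp F \<inter> unit_sphere_in L = {c\<in>Sph. F \<subseteq> Fp c}" if "F face_of Qp" for F
    using normal_cone_eq[OF face_of_imp_subset[OF that], of L]
    by (auto simp: Sph_def unit_sphere_in_def Fp_def)
  then show ?thesis unfolding geodesic_map_def by blast
qed

lemma geo_m: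
  "C \<in> geodesic_map L Qm \<longleftrightarrow> C \<noteq> {} \<and> (\<exists>F. F face_of Qm \<and> F \<noteq> {} \<and> C = {c\<in>Sph. F \<subseteq> Fm c})"
proof -
  have "normal_cone L Qm F \<inter> unit_sphere_in L = {c\<in>Sph. F \<subseteq> Fm c}" if "F face_of Qm" for F
    using normal_cone_eq[OF face_of_imp_subset[OF that], of L]
    by (auto simp: Sph_def unit_sphere_in_def Fm_def)
  then show ?thesis unfolding geodesic_map_def by blast
qed

lemma cells:
  "E \<in> Rf \<longleftrightarrow> E \<noteq> {} \<and> (\<exists>F1 F2. F1 face_of Qp \<and> F1 \<noteq> {} \<and> F2 face_of Qm \<and> F2 \<noteq> {} \<and>
      E = {c\<in>Sph. F1 \<subseteq> Fp c \<and> F2 \<subseteq> Fm c})"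
proof
  assume "E \<in> Rf"
  then obtain C D where CD: "E = C \<inter> D" "C \<in> geodesic_map L Qp" "D \<in> geodesic_map L Qm" "C \<inter> D \<noteq> {}"
    by (auto simp: Rf_def common_refinement_def)
  then obtain F1 F2 where "F1 face_of Qp" "F1 \<noteq> {}" "C = {c\<in>Sph. F1 \<subseteq> Fp c}"
    "F2 face_of Qm" "F2 \<noteq> {}" "D = {c\<in>Sph. F2 \<subseteq> Fm c}"
    using geo_p geo_m by meson
  then show "E \<noteq> {} \<and> (\<exists>F1 F2. F1 face_of Qp \<and> F1 \<noteq> {} \<and> F2 face_of Qm \<and> F2 \<noteq> {} \<and>
      E = {c\<in>Sph. F1 \<subseteq> Fp c \<and> F2 \<subseteq> Fm c})" using CD by blast
next
  assume "E \<noteq> {} \<and> (\<exists>F1 F2. F1 face_of Qp \<and> F1 \<noteq> {} \<and> F2 face_of Qm \<and> F2 \<noteq> {} \<and>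
      E = {c\<in>Sph. F1 \<subseteq> Fp c \<and> F2 \<subseteq> Fm c})"
  then obtain F1 F2 where F: "F1 face_of Qp" "F1 \<noteq> {}" "F2 face_of Qm" "F2 \<noteq> {}"
    and E: "E = {c\<in>Sph. F1 \<subseteq> Fp c \<and> F2 \<subseteq> Fm c}" "E \<noteq> {}" by blast
  let ?C = "{c\<in>Sph. F1 \<subseteq> Fp c}" and ?D = "{c\<in>Sph. F2 \<subseteq> Fm c}"
  have "?C \<in> geodesic_map L Qp" using F E geo_p by blast
  moreover have "?D \<in> geodesic_map L Qm" using F E geo_m by blast
  moreover have "E = ?C \<inter> ?D" using E by blast
  ultimately show "E \<in> Rf" using E unfolding Rf_def common_refinement_def by blast
qed

lemma NS_eq: "c \<in> Sph \<Longrightarrow> NS c = {c'\<in>Sph. Fp c \<subseteq> Fp c' \<and> Fm c \<subseteq> Fm c'}"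
proof (intro set_eqI)
  fix c' assume c: "c \<in> Sph"
  show "c' \<in> NS c \<longleftrightarrow> c' \<in> {c'\<in>Sph. Fp c \<subseteq> Fp c' \<and> Fm c \<subseteq> Fm c'}"
  proof (cases "c' \<in> Sph")
    case True
    then show ?thesis using G_sub[OF Sph_u[OF c] Sph_u[OF True]] by (simp add: NS_def)
  next
    case False
    then show ?thesis by (simp add: NS_def)
  qed
qed

lemma RV: "c \<in> map_vertices Rf \<longleftrightarrow> c \<in> Sph \<and> G c facet_of Q"
proof
  assume "c \<in> map_vertices Rf"
  then have "{c} \<in> Rf" by (simp add: map_vertices_def)
  then obtain F1 F2 where F: "F1 face_of Qp" "F1 \<noteq> {}" "F2 face_of Qm" "F2 \<noteq> {}"
    and E: "{c} = {c'\<in>Sph. F1 \<subseteq> Fp c' \<and> F2 \<subseteq> Fm c'}" unfolding cells by blast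
  have cin: "c \<in> {c'\<in>Sph. F1 \<subseteq> Fp c' \<and> F2 \<subseteq> Fm c'}" using E by blast
  then have c: "c \<in> Sph" "F1 \<subseteq> Fp c" "F2 \<subseteq> Fm c" by auto
  have "NS c = {c}"
  proof (intro set_eqI iffI)
    fix c' assume "c' \<in> NS c"
    then have "c' \<in> Sph" "Fp c \<subseteq> Fp c'" "Fm c \<subseteq> Fm c'"
      unfolding NS_eq[OF c(1)] by auto
    then have "c' \<in> {c'\<in>Sph. F1 \<subseteq> Fp c' \<and> F2 \<subseteq> Fm c'}" using c by auto
    then show "c' \<in> {c}" unfolding E[symmetric] .
  next
    fix c' assume "c' \<in> {c}" then show "c' \<in> NS c" using c by (simp add: NS_def)
  qed
  then show "c \<in> Sph \<and> G c facet_of Q" using V[OF c(1)] c(1) by simp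
next
  assume c: "c \<in> Sph \<and> G c facet_of Q"
  then have ns: "NS c = {c}" using V[of c] by blast
  then have eqc: "{c} = {c'\<in>Sph. Fp c \<subseteq> Fp c' \<and> Fm c \<subseteq> Fm c'}"
    using NS_eq c by simp
  have ex: "\<exists>F1 F2. F1 face_of Qp \<and> F1 \<noteq> {} \<and> F2 face_of Qm \<and> F2 \<noteq> {} \<and>
      {c} = {c'\<in>Sph. F1 \<subseteq> Fp c' \<and> F2 \<subseteq> Fm c'}"
    by (rule exI[of _ "Fp c"], rule exI[of _ "Fm c"]) (simp add: Fp_face Fm_face Fp_ne Fm_ne eqc[symmetric])
  have "{c} \<in> Rf" unfolding cells[of "{c}"] using ex by simp
  then show "c \<in> map_vertices Rf" by (simp add: map_vertices_def)
qed

lemma R_sub_G: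
  assumes R: "R face_of Q" and cu: "c \<bullet> u = 0" and p: "R \<inter> Qp \<subseteq> Fp c" and m: "R \<inter> Qm \<subseteq> Fm c"
  shows "R \<subseteq> G c"
proof -
  have "R = convex hull ((R \<inter> Qp) \<union> (R \<inter> Qm))" using face_hull[OF R] .
  also have "\<dots> \<subseteq> convex hull (Fp c \<union> Fm c)" using p m by (intro hull_mono) auto
  finally show ?thesis by (simp add: G_def)
qed

lemma E1:
  assumes v: "v \<in> Sph" "G v facet_of Q" and w: "w \<in> Sph" "G w facet_of Q" and vw: "v \<noteq> w"
    and R: "ridge_of R Q" "R \<subseteq> G v" "R \<subseteq> G w"
  shows "map_adjacent Rf v w"
proof -
  have vu: "v \<bullet> u = 0" and wu: "w \<bullet> u = 0" using v w Sph_u by auto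
  have Rf: "R face_of Q" "R \<noteq> {}" "aff_dim R = int DIM('a) - 2"
    using R(1) affQ by (auto simp: ridge_of_def)
  have Rp: "R \<inter> Qp \<subseteq> Fp v \<inter> Fp w" using R G_Qp vu wu by blast
  have Rm: "R \<inter> Qm \<subseteq> Fm v \<inter> Fm w" using R G_Qm vu wu by blast
  have nQp: "\<not> R \<subseteq> Qp"
  proof
    assume RQ: "R \<subseteq> Qp"
    have "R facet_of Qp"
      using face_of_subset[OF Rf(1) RQ QpQ] Rf Qpf affQ by (simp add: facet_of_def)
    moreover have "R \<subseteq> argmax_set Qp v" "R \<subseteq> argmax_set Qp w"
      using Rp RQ by (auto simp: Fp_def)
    ultimately have "w = v" using base.B2[OF baseP] v w SphP by metis
    then show False using vw by simp
  qed
  have nQm: "\<not> R \<subseteq> Qm"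
  proof
    assume RQ: "R \<subseteq> Qm"
    have "R facet_of Qm"
      using face_of_subset[OF Rf(1) RQ QmQ] Rf Qmf affQ by (simp add: facet_of_def)
    moreover have "R \<subseteq> argmax_set Qm v" "R \<subseteq> argmax_set Qm w"
      using Rm RQ by (auto simp: Fm_def)
    ultimately have "w = v" using base.B2[OF baseM] v w SphP by metis
    then show False using vw by simp
  qed
  have Rp0: "R \<inter> Qp \<noteq> {}"
  proof
    assume "R \<inter> Qp = {}"
    then have "R = convex hull (R \<inter> Qm)" using face_hull[OF Rf(1)] by simp
    also have "\<dots> \<subseteq> Qm" using convQm by (intro hull_minimal) auto
    finally show False using nQm by simp
  qed
  have Rm0: "R \<inter> Qm \<noteq> {}"
  proof
    assume "R \<inter> Qm = {}"
    then have "R = convex hull (R \<inter> Qp)" using face_hull[OF Rf(1)] by simp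
    also have "\<dots> \<subseteq> Qp" using convQp by (intro hull_minimal) auto
    finally show False using nQp by simp
  qed
  define F1 where "F1 = Fp v \<inter> Fp w"
  define F2 where "F2 = Fm v \<inter> Fm w"
  have F1: "F1 face_of Qp" "F1 \<noteq> {}" using Fp_face Rp Rp0 by (auto simp: F1_def face_of_Int)
  have F2: "F2 face_of Qm" "F2 \<noteq> {}" using Fm_face Rm Rm0 by (auto simp: F2_def face_of_Int)
  define E where "E = {c\<in>Sph. F1 \<subseteq> Fp c \<and> F2 \<subseteq> Fm c}"
  have vE: "v \<in> E" and wE: "w \<in> E" using v w by (auto simp: E_def F1_def F2_def)
  have ERf: "E \<in> Rf" unfolding cells using F1 F2 vE by (auto simp: E_def)
  have ind: "independent {v, w}"
  proof -
    have "w \<notin> span {v}"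
    proof
      assume "w \<in> span {v}"
      then obtain l where l: "w = l *\<^sub>R v" by (auto simp: span_singleton)
      then have "norm w = \<bar>l\<bar> * norm v" by simp
      then have "\<bar>l\<bar> = 1" using v w by (simp add: Sph_iff)
      then consider "l = 1" | "l = -1" by linarith
      then show False
      proof cases
        case 1 then show False using l vw by simp
      next
        case 2
        obtain x0 where "x0 \<in> F1" using F1 by blast
        then have "x0 \<in> Fp v" "x0 \<in> Fp (- v)" using l 2 by (auto simp: F1_def)
        then have "v = 0" using antipodal_p vu by blast
        then show False using Sph_0 v by blast
      qed
    qed
    moreover have "v \<notin> span {}" using Sph_0 v by simp
    ultimately show ?thesis by (simp add: independent_insert insert_commute[of v w] vw[symmetric])
  qed
  have "dim {v, w} = 2" using dim_eq_card_independent[OF ind] vw by simp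
  moreover have "dim {v, w} \<le> dim E" using vE wE by (intro dim_subset) auto
  ultimately have ge: "dim E \<ge> 2" by simp
  obtain x0 where x0: "x0 \<in> R" using Rf by blast
  define W where "W = {n. \<forall>x\<in>R. n \<bullet> x = n \<bullet> x0}"
  have dW: "int (dim W) = 2" using normals_dim[OF x0] Rf(3) by (simp add: W_def)
  have "E \<subseteq> prj ` W"
  proof
    fix c' assume c': "c' \<in> E"
    then have cu': "c' \<bullet> u = 0" using Sph_u by (auto simp: E_def)
    have "R \<inter> Qp \<subseteq> Fp c'" "R \<inter> Qm \<subseteq> Fm c'"
      using c' Rp Rm by (auto simp: E_def F1_def F2_def)
    then have "R \<subseteq> G c'" by (rule R_sub_G[OF Rf(1) cu'])
    note RG = this
    have "nv c' \<bullet> x = nv c' \<bullet> x0" if "x \<in> R" for x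
    proof -
      have "x \<in> G c'" "x0 \<in> G c'" using RG that x0 by auto
      then show ?thesis using G_const[OF cu'] by simp
    qed
    then have "nv c' \<in> W" by (simp add: W_def)
    moreover have "c' = prj (nv c')" using prj_nv[OF cu'] by simp
    ultimately show "c' \<in> prj ` W" by blast
  qed
  then have "dim E \<le> dim (prj ` W)" by (rule dim_subset)
  also have "\<dots> \<le> dim W" by (rule dim_image_le[OF linear_prj])
  finally have "dim E = 2" using ge dW by simp
  then have "E \<in> map_edges Rf" using ERf by (simp add: map_edges_def)
  moreover have "v \<in> map_vertices Rf" "w \<in> map_vertices Rf" using RV v w by auto
  ultimately show ?thesis using vE wE by (auto simp: map_adjacent_def)
qed

lemma E2:
  assumes v: "v \<in> map_vertices Rf" and w: "w \<in> map_vertices Rf" and vw: "v \<noteq> w"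
    and E: "E \<in> map_edges Rf" "v \<in> E" "w \<in> E"
  shows "\<exists>R. ridge_of R Q \<and> R \<subseteq> G v \<and> R \<subseteq> G w"
proof -
  have vS: "v \<in> Sph" "G v facet_of Q" and wS: "w \<in> Sph" "G w facet_of Q" using v w RV by auto
  have vu: "v \<bullet> u = 0" and wu: "w \<bullet> u = 0" using vS wS Sph_u by auto
  have ERf: "E \<in> Rf" and dE: "dim E = 2" using E by (auto simp: map_edges_def)
  obtain F1 F2 where F: "F1 face_of Qp" "F1 \<noteq> {}" "F2 face_of Qm" "F2 \<noteq> {}"
    and Eeq: "E = {c\<in>Sph. F1 \<subseteq> Fp c \<and> F2 \<subseteq> Fm c}" using ERf unfolding cells by blast
  have F1v: "F1 \<subseteq> Fp v" "F1 \<subseteq> Fp w" "F2 \<subseteq> Fm v" "F2 \<subseteq> Fm w" using E(2,3) Eeq by auto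
  have F1Qp: "F1 \<subseteq> Qp" "F2 \<subseteq> Qm" using F face_of_imp_subset by blast+
  define R where "R = G v \<inter> G w"
  have RF: "R face_of Q" unfolding R_def using G_face vu wu by (simp add: face_of_Int)
  have FpG: "Fp c \<subseteq> G c" "Fm c \<subseteq> G c" if "c \<bullet> u = 0" for c using G_Qp[OF that] G_Qm[OF that] by auto
  have F1R: "F1 \<subseteq> R" "F2 \<subseteq> R" using F1v FpG[OF vu] FpG[OF wu] by (auto simp: R_def)
  have Rne: "R \<noteq> {}" using F1R F by blast
  have RGv: "R \<noteq> G v"
  proof
    assume "R = G v"
    then have "G v \<subseteq> G w" by (auto simp: R_def)
    then have "w \<in> NS v" using wS by (simp add: NS_def)
    then show False using V vS vw by auto
  qed
  have Rfv: "R face_of G v" using face_of_subset[OF RF _ face_of_imp_subset[OF G_face[OF vu]]] by (auto simp: R_def)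
  have up: "aff_dim R < int DIM('a) - 1"
    using face_of_aff_dim_lt[OF G_conv Rfv RGv] vS affQ by (simp add: facet_of_def)
  have RQ: "R \<noteq> Q" using up affQ by auto
  obtain HS where "finite HS" and seq: "Q = affine hull Q \<inter> \<Inter>HS"
             and faces: "\<And>h. h \<in> HS \<Longrightarrow> \<exists>a b. a \<noteq> 0 \<and> h = {x. a \<bullet> x \<le> b}"
             and min: "\<And>F'. F' \<subset> HS \<Longrightarrow> Q \<subset> (affine hull Q) \<inter> \<Inter>F'"
    using polyhQ by (simp add: polyhedron_Int_affine_minimal) meson
  then obtain av bv where avb: "\<And>h. h \<in> HS \<Longrightarrow> av h \<noteq> 0 \<and> h = {x. av h \<bullet> x \<le> bv h}"
    by metis
  note facet_iff = facet_of_polyhedron_explicit[OF \<open>finite HS\<close> seq avb min]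
  have ahQ: "affine hull Q = UNIV" using affQ aff_dim_eq_full by blast
  have Qeq: "Q = \<Inter>HS" using seq ahQ by simp
  have Qh: "Q \<subseteq> {x. av h \<bullet> x \<le> bv h}" if "h \<in> HS" for h
    using Qeq avb[OF that] that by blast
  obtain x0 where x0r: "x0 \<in> rel_interior R"
    using Rne rel_interior_eq_empty[OF face_of_imp_convex[OF RF]] by blast
  have x0R: "x0 \<in> R" using x0r rel_interior_subset by blast
  have RsQ: "R \<subseteq> Q" using RF face_of_imp_subset by blast
  define T where "T = {h\<in>HS. av h \<bullet> x0 = bv h}"
  have Th: "R \<subseteq> Q \<inter> {x. av h \<bullet> x = bv h}" "(Q \<inter> {x. av h \<bullet> x = bv h}) facet_of Q" if "h \<in> T" for h
  proof -
    have hH: "h \<in> HS" using that by (simp add: T_def)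
    show fa: "(Q \<inter> {x. av h \<bullet> x = bv h}) facet_of Q" using facet_iff hH by blast
    show "R \<subseteq> Q \<inter> {x. av h \<bullet> x = bv h}"
    proof (rule subset_of_face_of[OF facet_of_imp_face_of[OF fa] RsQ])
      show "(Q \<inter> {x. av h \<bullet> x = bv h}) \<inter> rel_interior R \<noteq> {}"
        using x0r x0R RsQ that by (auto simp: T_def)
    qed
  qed
  obtain xp where xp: "xp \<in> F1" using F by blast
  obtain xm where xm: "xm \<in> F2" using F by blast
  define \<delta> where "\<delta> = xp - xm"
  have "u \<bullet> xp = a" "u \<bullet> xm = b" using Qpu Qmu F1Qp xp xm by auto
  then have ud: "u \<bullet> \<delta> \<noteq> 0" using ab by (simp add: \<delta>_def inner_diff_right)
  define X where "X = av ` T"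
  have Xd: "n \<bullet> \<delta> = 0" if nX: "n \<in> X" for n
  proof -
    obtain h where h: "h \<in> T" "n = av h" using nX X_def by blast
    have "xp \<in> R" "xm \<in> R" using xp xm F1R by auto
    then have "av h \<bullet> xp = bv h" "av h \<bullet> xm = bv h" using Th(1)[OF h(1)] by auto
    then show ?thesis using h by (simp add: \<delta>_def inner_diff_right)
  qed
  have XE: "prj ` X \<subseteq> span E"
  proof
    fix y assume "y \<in> prj ` X"
    then obtain h where h: "h \<in> T" "y = prj (av h)" using X_def by blast
    have hH: "h \<in> HS" using h by (simp add: T_def)
    let ?Fh = "Q \<inter> {x. av h \<bullet> x = bv h}"
    have ne: "?Fh \<noteq> Qp" "?Fh \<noteq> Qm" using Th(1)[OF h(1)] F1R F1Qp F disj by blast+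
    note sf = SFgen[OF Th(2)[OF h(1)] ne avb[OF hH, THEN conjunct1] Qh[OF hH] refl]
    define ch where "ch = (1 / norm (prj (av h))) *\<^sub>R prj (av h)"
    have chS: "ch \<in> Sph" using sf(1) prj_u by (simp add: ch_def Sph_iff)
    have "Fp ch = Fp (prj (av h))" "Fm ch = Fm (prj (av h))" unfolding ch_def using sf(1)
      by (simp_all add: Fp_scale Fm_scale)
    then have "F1 \<subseteq> Fp ch" "F2 \<subseteq> Fm ch" using sf(2,3) Th(1)[OF h(1)] F1R F1Qp by blast+
    then have "ch \<in> E" using chS Eeq by blast
    moreover have "y = norm (prj (av h)) *\<^sub>R ch" using sf(1) h by (simp add: ch_def)
    ultimately show "y \<in> span E" by (simp add: span_base span_mul)
  qed
  have subd: "subspace {y. y \<bullet> \<delta> = 0}" unfolding subspace_def by (simp add: inner_add_left)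
  have spX: "span X \<subseteq> {y. y \<bullet> \<delta> = 0}" using Xd by (intro span_minimal subd) auto
  have inj: "inj_on prj (span X)"
  proof (rule inj_onI)
    fix y1 y2 assume y: "y1 \<in> span X" "y2 \<in> span X" "prj y1 = prj y2"
    then have "prj (y1 - y2) = 0" using linear_diff[OF linear_prj] by simp
    then have k: "y1 - y2 = (((y1 - y2) \<bullet> u) / (u \<bullet> u)) *\<^sub>R u" by (rule prj_zero)
    have "y1 \<bullet> \<delta> = 0" "y2 \<bullet> \<delta> = 0" using y(1,2) spX by auto
    then have "(y1 - y2) \<bullet> \<delta> = 0" by (simp add: inner_diff_left)
    then have "(((y1 - y2) \<bullet> u) / (u \<bullet> u)) * (u \<bullet> \<delta>) = 0" using k by (metis inner_scaleR_left)
    then have z: "((y1 - y2) \<bullet> u) / (u \<bullet> u) = 0" using ud by simp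
    have "y1 - y2 = 0" using k unfolding z by simp
    then show "y1 = y2" by simp
  qed
  have "dim X = dim (prj ` X)" using dim_image_eq[OF linear_prj inj] by simp
  also have "\<dots> \<le> dim (span E)" using XE by (rule dim_subset)
  also have "\<dots> = 2" using dE by simp
  finally have dX: "dim X \<le> 2" .
  define A where "A = {y. \<forall>n\<in>X. n \<bullet> y = n \<bullet> x0}"
  have affA: "aff_dim A = int DIM('a) - int (dim X)" unfolding A_def by (rule aff_dim_orth_set)
  have convA: "convex A" unfolding A_def convex_def
    by (auto simp: inner_add_right algebra_simps) (metis distrib_right mult_1)
  define Op where "Op = \<Inter>((\<lambda>h. {x. av h \<bullet> x < bv h}) ` (HS - T))"
  have openO: "open Op" unfolding Op_def using \<open>finite HS\<close> by (intro open_Inter) (auto intro: open_halfspace_lt)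
  have x0O: "x0 \<in> Op"
  proof -
    have "av h \<bullet> x0 < bv h" if "h \<in> HS - T" for h
      using Qh[of h] that x0R RsQ by (force simp: T_def)
    then show ?thesis by (auto simp: Op_def)
  qed
  have x0A: "x0 \<in> A" by (simp add: A_def)
  have AOR: "A \<inter> Op \<subseteq> R"
  proof
    fix y assume y: "y \<in> A \<inter> Op"
    have yT: "av h \<bullet> y = bv h" if "h \<in> T" for h
    proof -
      have "av h \<in> X" using that by (simp add: X_def)
      then have "av h \<bullet> y = av h \<bullet> x0" using y by (simp add: A_def)
      then show ?thesis using that by (simp add: T_def)
    qed
    have yQ: "y \<in> Q"
    proof -
      have "y \<in> h" if "h \<in> HS" for h
      proof -
        have hh: "h = {x. av h \<bullet> x \<le> bv h}" using avb[OF that] by blast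
        show ?thesis
        proof (cases "h \<in> T")
          case True then show ?thesis using yT[OF True] by (subst hh) simp
        next
          case False
          then have "av h \<bullet> y < bv h" using y that by (auto simp: Op_def)
          then show ?thesis by (subst hh) simp
        qed
      qed
      then show ?thesis using Qeq by blast
    qed
    have Req: "R = \<Inter>{G'. G' facet_of Q \<and> R \<subseteq> G'}" using face_of_polyhedron[OF polyhQ RF Rne RQ] .
    have "y \<in> G'" if "G' facet_of Q" "R \<subseteq> G'" for G'
    proof -
      have "\<exists>h. h \<in> HS \<and> G' = Q \<inter> {x. av h \<bullet> x = bv h}" using facet_iff[of G'] that(1) by simp
      then obtain h where h: "h \<in> HS" "G' = Q \<inter> {x. av h \<bullet> x = bv h}" by blast
      have "x0 \<in> G'" using that(2) x0R by blast
      then have "h \<in> T" using h by (simp add: T_def)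
      then show ?thesis using yT[of h] yQ h(2) by simp
    qed
    then have "y \<in> \<Inter>{G'. G' facet_of Q \<and> R \<subseteq> G'}" by blast
    then show "y \<in> R" using Req by simp
  qed
  have "aff_dim A = aff_dim (A \<inter> Op)"
  proof -
    have "A \<inter> Op \<noteq> {}" using x0A x0O by blast
    then show ?thesis using aff_dim_convex_Int_open[OF convA openO] by simp
  qed
  also have "\<dots> \<le> aff_dim R" using AOR by (rule aff_dim_subset)
  finally have lo: "aff_dim R \<ge> int DIM('a) - 2" using affA dX by linarith
  have "ridge_of R Q" using RF Rne up lo affQ by (simp add: ridge_of_def)
  then show ?thesis by (auto simp: R_def)
qed

end

definition walk :: "'b set \<Rightarrow> 'b set \<Rightarrow> 'b set \<Rightarrow> ('b \<Rightarrow> 'b \<Rightarrow> bool) \<Rightarrow> nat \<Rightarrow> (nat \<Rightarrow> 'b) \<Rightarrow> bool" where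
  "walk A B V S k p \<longleftrightarrow> p 0 \<in> A \<and> p k \<in> B \<and> (\<forall>i\<le>k. p i \<in> V) \<and> (\<forall>i<k. S (p i) (p (Suc i)))"

lemma min_walk:
  assumes "walk A B V S k p"
  shows "\<exists>k' p'. k' \<le> k \<and> walk A B V S k' p' \<and> (\<forall>k'' p''. walk A B V S k'' p'' \<longrightarrow> k' \<le> k'')"
proof -
  let ?P = "\<lambda>k. \<exists>p. walk A B V S k p"
  have ex: "?P k" using assms by blast
  define k' where "k' = (LEAST k. ?P k)"
  have "?P k'" unfolding k'_def using ex by (rule LeastI)
  moreover have "k' \<le> k" unfolding k'_def using ex by (rule Least_le)
  moreover have "\<forall>k'' p''. walk A B V S k'' p'' \<longrightarrow> k' \<le> k''"
    unfolding k'_def by (auto intro: Least_le)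
  ultimately show ?thesis by blast
qed

lemma min_walk_props:
  assumes w: "walk A B V S k p" and m0: "\<forall>k'' p''. walk A B V S k'' p'' \<longrightarrow> k \<le> k''"
  shows "\<And>i. i < k \<Longrightarrow> p i \<notin> B" "\<And>i. 0 < i \<Longrightarrow> i \<le> k \<Longrightarrow> p i \<notin> A"
    "\<And>i. i < k \<Longrightarrow> p i \<noteq> p (Suc i)"
proof -
  fix i assume i: "i < k"
  show "p i \<notin> B"
  proof
    assume "p i \<in> B"
    then have "walk A B V S i p" using w i by (auto simp: walk_def)
    then show False using m0 i by fastforce
  qed
next
  fix i assume i: "0 < i" "i \<le> k"
  show "p i \<notin> A"
  proof
    assume pA: "p i \<in> A"
    have "walk A B V S (k - i) (\<lambda>j. p (j + i))"
      unfolding walk_def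
    proof (intro conjI allI impI)
      show "p (0 + i) \<in> A" using pA by simp
      show "p (k - i + i) \<in> B" using w i by (simp add: walk_def)
      show "p (j + i) \<in> V" if "j \<le> k - i" for j using w that i by (simp add: walk_def)
      show "S (p (j + i)) (p (Suc j + i))" if "j < k - i" for j using w that i by (simp add: walk_def)
    qed
    then show False using m0[rule_format, of "k - i"] i by fastforce
  qed
next
  fix i assume i: "i < k"
  show "p i \<noteq> p (Suc i)"
  proof
    assume eq: "p i = p (Suc i)"
    define p' where "p' = (\<lambda>j. if j \<le> i then p j else p (Suc j))"
    have "walk A B V S (k - 1) p'"
      unfolding walk_def
    proof (intro conjI allI impI)
      show "p' 0 \<in> A" using w by (simp add: p'_def walk_def)
      show "p' (k - 1) \<in> B"
      proof (cases "k - 1 \<le> i")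
        case True
        then have "i = k - 1" using i by simp
        then show ?thesis using w eq i by (simp add: p'_def walk_def)
      next
        case False
        then show ?thesis using w i by (simp add: p'_def walk_def)
      qed
      show "p' j \<in> V" if "j \<le> k - 1" for j using w that i by (simp add: p'_def walk_def)
      show "S (p' j) (p' (Suc j))" if "j < k - 1" for j
      proof -
        consider "j < i" | "j = i" | "j > i" by linarith
        then show ?thesis
        proof cases
          case 1 then show ?thesis using w that by (simp add: p'_def walk_def)
        next
          case 2
          then have "S (p (Suc i)) (p (Suc (Suc i)))" using w that by (simp add: walk_def)
          then show ?thesis using 2 eq by (simp add: p'_def)
        next
          case 3 then show ?thesis using w that by (simp add: p'_def walk_def)
        qed
      qed
    qed
    then show False using m0[rule_format, of "k - 1"] i by fastforce
  qed
qed

context prism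
begin

lemma adjQp:
  assumes c: "c \<in> Sph" and R: "ridge_of R Q" "R \<subseteq> Qp" "R \<subseteq> G c"
  shows "Fp c facet_of Qp"
proof -
  have cu: "c \<bullet> u = 0" using c Sph_u by blast
  have RF: "R \<subseteq> Fp c" using R G_Qp[OF cu] by blast
  have "Fp c \<noteq> Qp" using base.B5(1)[OF baseP, of c] c SphP by (simp add: Fp_def)
  then have "aff_dim (Fp c) < aff_dim Qp" using face_of_aff_dim_lt[OF convQp Fp_face] by blast
  moreover have "aff_dim R \<le> aff_dim (Fp c)" using RF by (rule aff_dim_subset)
  ultimately show ?thesis using R(1) affQ Qpf Fp_face Fp_ne by (simp add: ridge_of_def facet_of_def)
qed

lemma adjQm:
  assumes c: "c \<in> Sph" and R: "ridge_of R Q" "R \<subseteq> Qm" "R \<subseteq> G c"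
  shows "Fm c facet_of Qm"
proof -
  have cu: "c \<bullet> u = 0" using c Sph_u by blast
  have RF: "R \<subseteq> Fm c" using R G_Qm[OF cu] by blast
  have "Fm c \<noteq> Qm" using base.B5(1)[OF baseM, of c] c SphP by (simp add: Fm_def)
  then have "aff_dim (Fm c) < aff_dim Qm" using face_of_aff_dim_lt[OF convQm Fm_face] by blast
  moreover have "aff_dim R \<le> aff_dim (Fm c)" using RF by (rule aff_dim_subset)
  ultimately show ?thesis using R(1) affQ Qmf Fm_face Fm_ne by (simp add: ridge_of_def facet_of_def)
qed

lemma vp_iff: "c \<in> map_vertices (geodesic_map L Qp) \<longleftrightarrow> c \<in> Sph \<and> Fp c facet_of Qp"
  using base.B7[OF baseP, of c] LP SphP by (simp add: Fp_def)
lemma vm_iff: "c \<in> map_vertices (geodesic_map L Qm) \<longleftrightarrow> c \<in> Sph \<and> Fm c facet_of Qm"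
  using base.B7[OF baseM, of c] LP SphP by (simp add: Fm_def)

lemma ridge_p:
  assumes "c \<in> Sph" "Fp c facet_of Qp" shows "ridge_of (Fp c) Q \<and> Fp c \<subseteq> Qp \<and> Fp c \<subseteq> G c"
proof -
  have "Fp c face_of Q" using face_of_trans[OF Fp_face facet_of_imp_face_of[OF Qpf]] .
  moreover have "Fp c \<subseteq> G c" using G_Qp[OF Sph_u[OF assms(1)]] by blast
  ultimately show ?thesis using assms(2) Qpf affQ Fp_sub by (simp add: ridge_of_def facet_of_def)
qed

lemma ridge_m:
  assumes "c \<in> Sph" "Fm c facet_of Qm" shows "ridge_of (Fm c) Q \<and> Fm c \<subseteq> Qm \<and> Fm c \<subseteq> G c"
proof -
  have "Fm c face_of Q" using face_of_trans[OF Fm_face facet_of_imp_face_of[OF Qmf]] .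
  moreover have "Fm c \<subseteq> G c" using G_Qm[OF Sph_u[OF assms(1)]] by blast
  ultimately show ?thesis using assms(2) Qmf affQ Fm_sub by (simp add: ridge_of_def facet_of_def)
qed

definition "SR F1 F2 \<longleftrightarrow> (\<exists>R. ridge_of R Q \<and> R \<subseteq> F1 \<and> R \<subseteq> F2)"

lemma fr_walk: "facet_reach Q Qp Qm n \<longleftrightarrow> (\<exists>k\<le>n. \<exists>Fs. walk {Qp} {Qm} {F. F facet_of Q} SR k Fs)"
  by (simp add: facet_reach_def walk_def SR_def)

lemma mr_walk: "map_reach M A B n \<longleftrightarrow> (\<exists>k\<le>n. \<exists>p. walk A B (map_vertices M) (map_adjacent M) k p)"
  by (simp add: map_reach_def walk_def)

lemma dir1:
  assumes "facet_reach Q Qp Qm DIM('a)"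
  shows "map_reach Rf (map_vertices (geodesic_map L Qp)) (map_vertices (geodesic_map L Qm)) (DIM('a) - 2)"
proof -
  obtain k0 Fs0 where k0: "k0 \<le> DIM('a)" and w0: "walk {Qp} {Qm} {F. F facet_of Q} SR k0 Fs0"
    using assms fr_walk by blast
  obtain k Fs where kk: "k \<le> k0" and w: "walk {Qp} {Qm} {F. F facet_of Q} SR k Fs"
    and m': "\<forall>k'' p''. walk {Qp} {Qm} {F. F facet_of Q} SR k'' p'' \<longrightarrow> k \<le> k''"
    using min_walk[OF w0] by blast
  have m: "\<And>k'' p''. walk {Qp} {Qm} {F. F facet_of Q} SR k'' p'' \<Longrightarrow> k \<le> k''" using m' by blast
  have kd: "k \<le> DIM('a)" using kk k0 by simp
  note mp = min_walk_props[OF w m']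
  have w0: "Fs 0 = Qp" "Fs k = Qm" and wf: "\<And>i. i \<le> k \<Longrightarrow> Fs i facet_of Q"
    and ws: "\<And>i. i < k \<Longrightarrow> SR (Fs i) (Fs (Suc i))" using w by (auto simp: walk_def)
  have "k \<noteq> 0" using w0 Qpm by auto
  moreover have "k \<noteq> 1"
  proof
    assume "k = 1"
    then have "SR Qp Qm" using ws[of 0] w0 by simp
    then obtain R where "ridge_of R Q" "R \<subseteq> Qp" "R \<subseteq> Qm" by (auto simp: SR_def)
    then show False using disj by (auto simp: ridge_of_def)
  qed
  ultimately have k2: "k \<ge> 2" by linarith
  have side: "\<exists>c. c \<in> Sph \<and> Fs i = G c" if "0 < i" "i < k" for i
  proof -
    have "Fs i \<noteq> Qm" using mp(1) that by simp
    moreover have "Fs i \<noteq> Qp" using mp(2) that by simp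
    ultimately show ?thesis using SF wf[of i] that by auto
  qed
  define p where "p j = (SOME c. c \<in> Sph \<and> Fs (Suc j) = G c)" for j
  have pj: "p j \<in> Sph \<and> Fs (Suc j) = G (p j)" if "j \<le> k - 2" for j
    unfolding p_def by (rule someI_ex) (use side[of "Suc j"] that k2 in auto)
  have "walk (map_vertices (geodesic_map L Qp)) (map_vertices (geodesic_map L Qm)) (map_vertices Rf)
      (map_adjacent Rf) (k - 2) p"
    unfolding walk_def
  proof (intro conjI allI impI)
    obtain R where R: "ridge_of R Q" "R \<subseteq> Fs 0" "R \<subseteq> Fs 1" using ws[of 0] k2 by (auto simp: SR_def)
    have "Fp (p 0) facet_of Qp" using adjQp[of "p 0" R] pj[of 0] R w0 by auto
    then show "p 0 \<in> map_vertices (geodesic_map L Qp)" using vp_iff pj[of 0] by auto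
    obtain R' where R': "ridge_of R' Q" "R' \<subseteq> Fs (k - 1)" "R' \<subseteq> Fs (Suc (k - 1))"
      using ws[of "k - 1"] k2 by (auto simp: SR_def)
    have e: "Suc (k - 2) = k - 1" "Suc (k - 1) = k" using k2 by auto
    have "Fm (p (k - 2)) facet_of Qm" using adjQm[of "p (k - 2)" R'] pj[of "k - 2"] R' w0 e by auto
    then show "p (k - 2) \<in> map_vertices (geodesic_map L Qm)" using vm_iff pj[of "k - 2"] by auto
    show "p i \<in> map_vertices Rf" if "i \<le> k - 2" for i
      using RV pj[OF that] wf[of "Suc i"] that k2 by auto
    show "map_adjacent Rf (p i) (p (Suc i))" if ik: "i < k - 2" for i
    proof -
      have a: "p i \<in> Sph \<and> Fs (Suc i) = G (p i)" "p (Suc i) \<in> Sph \<and> Fs (Suc (Suc i)) = G (p (Suc i))"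
        using pj ik by auto
      have ne: "Fs (Suc i) \<noteq> Fs (Suc (Suc i))" using mp(3) ik by auto
      have si: "Suc i < k" using ik by simp
      obtain R where R: "ridge_of R Q" "R \<subseteq> Fs (Suc i)" "R \<subseteq> Fs (Suc (Suc i))"
        using ws[OF si] by (auto simp: SR_def)
      have f1: "G (p i) facet_of Q" using wf[of "Suc i"] a si by simp
      have f2: "G (p (Suc i)) facet_of Q" using wf[of "Suc (Suc i)"] a si by simp
      have pne: "p i \<noteq> p (Suc i)" using ne a by auto
      show ?thesis
        using E1[OF _ f1 _ f2 pne] a R by auto
    qed
  qed
  moreover have "k - 2 \<le> DIM('a) - 2" using kd by simp
  ultimately show ?thesis unfolding mr_walk by blast
qed

lemma dir2:
  assumes "map_reach Rf (map_vertices (geodesic_map L Qp)) (map_vertices (geodesic_map L Qm)) (DIM('a) - 2)"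
  shows "facet_reach Q Qp Qm DIM('a)"
proof -
  let ?A = "map_vertices (geodesic_map L Qp)" and ?B = "map_vertices (geodesic_map L Qm)"
  obtain k0 p0 where k0: "k0 \<le> DIM('a) - 2" and w0: "walk ?A ?B (map_vertices Rf) (map_adjacent Rf) k0 p0"
    using assms mr_walk by blast
  obtain k p where kk: "k \<le> k0" and w: "walk ?A ?B (map_vertices Rf) (map_adjacent Rf) k p"
    and m': "\<forall>k'' p''. walk ?A ?B (map_vertices Rf) (map_adjacent Rf) k'' p'' \<longrightarrow> k \<le> k''"
    using min_walk[OF w0] by blast
  have m: "\<And>k'' p''. walk ?A ?B (map_vertices Rf) (map_adjacent Rf) k'' p'' \<Longrightarrow> k \<le> k''" using m' by blast
  have kd: "k \<le> DIM('a) - 2" using kk k0 by simp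
  note mp = min_walk_props[OF w m']
  have pA: "p 0 \<in> ?A" and pB: "p k \<in> ?B" and pV: "\<And>i. i \<le> k \<Longrightarrow> p i \<in> map_vertices Rf"
    and pS: "\<And>i. i < k \<Longrightarrow> map_adjacent Rf (p i) (p (Suc i))" using w by (auto simp: walk_def)
  have pG: "p i \<in> Sph \<and> G (p i) facet_of Q" if "i \<le> k" for i using RV pV[OF that] by blast
  define Fs where "Fs j = (if j = 0 then Qp else if j \<le> k + 1 then G (p (j - 1)) else Qm)" for j
  have "walk {Qp} {Qm} {F. F facet_of Q} SR (k + 2) Fs"
    unfolding walk_def
  proof (intro conjI allI impI)
    show "Fs 0 \<in> {Qp}" by (simp add: Fs_def)
    show "Fs (k + 2) \<in> {Qm}" by (simp add: Fs_def)
    show "Fs i \<in> {F. F facet_of Q}" if "i \<le> k + 2" for i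
      using pG[of "i - 1"] Qpf Qmf that by (auto simp: Fs_def)
    show "SR (Fs i) (Fs (Suc i))" if ik: "i < k + 2" for i
    proof -
      consider "i = 0" | "0 < i" "i \<le> k" | "i = k + 1" using ik by linarith
      then show ?thesis
      proof cases
        case 1
        have "p 0 \<in> Sph \<and> Fp (p 0) facet_of Qp" using vp_iff pA by blast
        then have "ridge_of (Fp (p 0)) Q \<and> Fp (p 0) \<subseteq> Qp \<and> Fp (p 0) \<subseteq> G (p 0)" using ridge_p by blast
        then show ?thesis using 1 by (auto simp: Fs_def SR_def)
      next
        case 2
        have adj: "map_adjacent Rf (p (i - 1)) (p i)" using pS[of "i - 1"] 2 by simp
        then obtain E where E: "E \<in> map_edges Rf" "p (i - 1) \<in> E" "p i \<in> E" by (auto simp: map_adjacent_def)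
        have "i - 1 < k" "Suc (i - 1) = i" using 2 by auto
        then have ne: "p (i - 1) \<noteq> p i" using mp(3)[of "i - 1"] by simp
        have "\<exists>R. ridge_of R Q \<and> R \<subseteq> G (p (i - 1)) \<and> R \<subseteq> G (p i)"
          using E2[OF _ _ ne E] adj by (auto simp: map_adjacent_def)
        then show ?thesis using 2 by (auto simp: Fs_def SR_def)
      next
        case 3
        have "p k \<in> Sph \<and> Fm (p k) facet_of Qm" using vm_iff pB by blast
        then have "ridge_of (Fm (p k)) Q \<and> Fm (p k) \<subseteq> Qm \<and> Fm (p k) \<subseteq> G (p k)" using ridge_m by blast
        then show ?thesis using 3 by (auto simp: Fs_def SR_def)
      qed
    qed
  qed
  moreover have "k + 2 \<le> DIM('a)" using kd dim2 by simp
  ultimately show ?thesis unfolding fr_walk by blast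
qed

lemma main:
  "facet_reach Q Qp Qm DIM('a) \<longleftrightarrow>
   map_reach Rf (map_vertices (geodesic_map L Qp)) (map_vertices (geodesic_map L Qm)) (DIM('a) - 2)"
  using dir1 dir2 by blast

end

theorem mainTheorem5:
  fixes Q Qp Qm :: "'a::euclidean_space set" and u :: 'a and a b :: real
  assumes "DIM('a) \<ge> 2"
    and "aff_dim Q = int DIM('a)"
    and "prismatoid Q Qp Qm u a b"
  defines "L \<equiv> {c::'a. c \<bullet> u = 0}"
  shows "facet_reach Q Qp Qm DIM('a) \<longleftrightarrow>
         map_reach (common_refinement (geodesic_map L Qp) (geodesic_map L Qm))
                   (map_vertices (geodesic_map L Qp)) (map_vertices (geodesic_map L Qm))
                   (DIM('a) - 2)"
proof -
  have P: "prism Q Qp Qm u a b" using assms(1-3) by (simp add: prism_def)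
  have "prism.L u = L" by (simp add: prism.L_def[OF P] L_def)
  then show ?thesis using prism.main[OF P] by (simp add: prism.Rf_def[OF P])
qed

end
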